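(* Fix a positive $\epsilon\in\Gamma$. Let $d_0\in\mathrm{Der}_0(\mathfrak{L},\mathfrak{V})$ satisfy $d_0(L_\epsilon)=0$. Then $d_0(L_{-\epsilon})=0$.
   Context: Let $\Gamma$ be a nontrivial additive subgroup of $\mathbb{R}$, and let $s\in\mathbb{R}$ with $2s\in\Gamma$. The Lie superalgebra $\mathfrak{L}$ over $\mathbb{C}$ has basis $\{L_p,I_p,G_r,H_r\mid p\in\Gamma,\ r\in s+\Gamma\}$. Here $L_p,I_p$ are even and $G_r,H_r$ are odd. The nonzero super-brackets are $[L_p,L_q]=(p-q)L_{p+q}$, $[L_p,I_q]=(p-q)I_{p+q}$, $[L_p,G_r]=(\tfrac p2-r)G_{p+r}$, $[L_p,H_r]=(\tfrac p2-r)H_{p+r}$, $[G_r,G_t]=I_{r+t}$, $[I_p,G_r]=(p-2r)H_{p+r}$. All other brackets of basis elements vanish, apart from those forced by super-antisymmetry. Grading: - $\mathbb{Z}_s=\Gamma\cup(s+\Gamma)$, an additive subgroup of $\mathbb{R}$. - $\mathfrak{L}=\bigoplus_{p\in\mathbb{Z}_s}\mathfrak{L}_p$, where $\mathfrak{L}_p$ is spanned by those of $L_p,I_p,G_p,H_p$ that exist. - $\mathfrak{V}=\mathfrak{L}\otimes\mathfrak{L}$, with $\mathfrak{V}_r=\bigoplus_{p+q=r}\mathfrak{L}_p\otimes\mathfrak{L}_q$. - $\mathfrak{L}$ acts on $\mathfrak{V}$ by $x\circ(a\otimes b)=[x,a]\otimes b+(-1)^{[x][a]}a\otimes[x,b]$,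 where $[x]$ is parity. Derivations: - A homogeneous derivation of parity $[d]$ is a linear map $d:\mathfrak{L}\to\mathfrak{V}$ shifting parity by $[d]$ and satisfying $d([x,y])=(-1)^{[d][x]}x\circ d(y)-(-1)^{[y]([d]+[x])}y\circ d(x)$. - A derivation is a sum of an even and an odd one. - $\mathrm{Der}_0(\mathfrak{L},\mathfrak{V})$ is the set of derivations $d$ with $d(\mathfrak{L}_p)\subset\mathfrak{V}_{p}$ for all $p\in\mathbb{Z}_s$. *)

theory Defs
  imports Complex_Main
begin

text \<open>Elements of the superalgebra are finitely supported complex-valued functions on
  basis elements; elements of the tensor square are finitely supported functions on
  pairs of basis elements (the tensor product of free vector spaces).\<close>

datatype bt = L | I | G | H

type_synonym bas = "bt \<times> real"
type_synonym lvec = "bas \<Rightarrow> complex"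
type_synonym vvec = "bas \<times> bas \<Rightarrow> complex"

definition valid :: "real set \<Rightarrow> real \<Rightarrow> bas \<Rightarrow> bool" where
  "valid \<Gamma> s b = (case fst b of
      L \<Rightarrow> snd b \<in> \<Gamma> | I \<Rightarrow> snd b \<in> \<Gamma>
    | G \<Rightarrow> snd b - s \<in> \<Gamma> | H \<Rightarrow> snd b - s \<in> \<Gamma>)"

fun par :: "bt \<Rightarrow> nat" where
  "par L = 0" | "par I = 0" | "par G = 1" | "par H = 1"

definition vec :: "bas \<Rightarrow> lvec" where
  "vec b = (\<lambda>c. if c = b then 1 else 0)"

definition cf :: "real \<Rightarrow> bas \<Rightarrow> lvec" where
  "cf r b = (\<lambda>c. if c = b then complex_of_real r else 0)"

text \<open>Super-bracket of basis elements (including those forced by super-antisymmetry).\<close>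
fun br :: "bas \<Rightarrow> bas \<Rightarrow> lvec" where
  "br (L,p) (L,q) = cf (p - q) (L, p + q)"
| "br (L,p) (I,q) = cf (p - q) (I, p + q)"
| "br (I,q) (L,p) = cf (-(p - q)) (I, p + q)"
| "br (L,p) (G,r) = cf (p/2 - r) (G, p + r)"
| "br (G,r) (L,p) = cf (-(p/2 - r)) (G, p + r)"
| "br (L,p) (H,r) = cf (p/2 - r) (H, p + r)"
| "br (H,r) (L,p) = cf (-(p/2 - r)) (H, p + r)"
| "br (G,r) (G,t) = cf 1 (I, r + t)"
| "br (I,p) (G,r) = cf (p - 2*r) (H, p + r)"
| "br (G,r) (I,p) = cf (-(p - 2*r)) (H, p + r)"
| "br _ _ = (\<lambda>_. 0)"

definition sgnc :: "nat \<Rightarrow> complex" where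
  "sgnc n = (-1) ^ n"

definition tens :: "lvec \<Rightarrow> lvec \<Rightarrow> vvec" where
  "tens u v = (\<lambda>(a,b). u a * v b)"

definition lin_ext :: "(bas \<Rightarrow> vvec) \<Rightarrow> lvec \<Rightarrow> vvec" where
  "lin_ext d v = (\<lambda>z. \<Sum>b\<in>{b. v b \<noteq> 0}. v b * d b z)"

definition act :: "bas \<Rightarrow> vvec \<Rightarrow> vvec" where
  "act x w = (\<lambda>z. \<Sum>ab\<in>{ab. w ab \<noteq> 0}. w ab *
      (tens (br x (fst ab)) (vec (snd ab)) z
       + sgnc (par (fst x) * par (fst (fst ab))) * tens (vec (fst ab)) (br x (snd ab)) z))"

text \<open>Homogeneous derivation of parity e (e = 0 even, e = 1 odd), given by its values
  on basis elements (a linear map is determined by them).\<close>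
definition homog_der :: "real set \<Rightarrow> real \<Rightarrow> nat \<Rightarrow> (bas \<Rightarrow> vvec) \<Rightarrow> bool" where
  "homog_der \<Gamma> s e d =
    ((\<forall>b. valid \<Gamma> s b \<longrightarrow> finite {w. d b w \<noteq> 0}
        \<and> (\<forall>a c. d b (a,c) \<noteq> 0 \<longrightarrow> valid \<Gamma> s a \<and> valid \<Gamma> s c
              \<and> (par (fst a) + par (fst c)) mod 2 = (par (fst b) + e) mod 2))
     \<and> (\<forall>x y. valid \<Gamma> s x \<longrightarrow> valid \<Gamma> s y \<longrightarrow>
          lin_ext d (br x y) =
            (\<lambda>z. sgnc (e * par (fst x)) * act x (d y) z
                 - sgnc (par (fst y) * (e + par (fst x))) * act y (d x) z)))"

definition Der0 :: "real set \<Rightarrow> real \<Rightarrow> (bas \<Rightarrow> vvec) set" where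
  "Der0 \<Gamma> s = {d. (\<exists>d0 d1. homog_der \<Gamma> s 0 d0 \<and> homog_der \<Gamma> s 1 d1
        \<and> (\<forall>b. valid \<Gamma> s b \<longrightarrow> d b = (\<lambda>z. d0 b z + d1 b z)))
     \<and> (\<forall>b a c. valid \<Gamma> s b \<longrightarrow> d b (a,c) \<noteq> 0 \<longrightarrow> snd a + snd c = snd b)}"

end

theory Submission
  imports Defs
begin


definition kd :: "bt \<Rightarrow> real \<Rightarrow> real \<Rightarrow> real" where
  "kd T p q = (case T of L \<Rightarrow> p - q | I \<Rightarrow> p - q | G \<Rightarrow> p/2 - q | H \<Rightarrow> p/2 - q)"

lemma br_L: "br (L,p) (T,q) = cf (kd T p q) (T, p+q)"
  by (cases T) (auto simp: kd_def)

lemma tens_app: "tens u v (a,b) = u a * v b" by (simp add: tens_def)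

lemma act_L_term1:
  "w ab * tens (br (L,p) (fst ab)) (vec (snd ab)) ((T,a),(T',b)) =
   (if ab = ((T,a-p),(T',b)) then w ((T,a-p),(T',b)) * complex_of_real (kd T p (a-p)) else 0)"
  by (cases ab) (auto simp: tens_def br_L cf_def vec_def split: if_splits)

lemma act_L_term2:
  "w ab * tens (vec (fst ab)) (br (L,p) (snd ab)) ((T,a),(T',b)) =
   (if ab = ((T,a),(T',b-p)) then w ((T,a),(T',b-p)) * complex_of_real (kd T' p (b-p)) else 0)"
  by (cases ab) (auto simp: tens_def br_L cf_def vec_def split: if_splits)

lemma act_L:
  assumes "finite {ab. w ab \<noteq> 0}"
  shows "act (L,p) w ((T,a),(T',b)) =
     complex_of_real (kd T p (a-p)) * w ((T,a-p),(T',b))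
   + complex_of_real (kd T' p (b-p)) * w ((T,a),(T',b-p))"
proof -
  let ?S = "{ab. w ab \<noteq> 0}"
  have "act (L,p) w ((T,a),(T',b)) =
     (\<Sum>ab\<in>?S. w ab * tens (br (L,p) (fst ab)) (vec (snd ab)) ((T,a),(T',b)))
   + (\<Sum>ab\<in>?S. w ab * tens (vec (fst ab)) (br (L,p) (snd ab)) ((T,a),(T',b)))"
    by (simp add: act_def sgnc_def distrib_left sum.distrib)
  also have "\<dots> = (if ((T,a-p),(T',b)) \<in> ?S then w ((T,a-p),(T',b)) * complex_of_real (kd T p (a-p)) else 0)
     + (if ((T,a),(T',b-p)) \<in> ?S then w ((T,a),(T',b-p)) * complex_of_real (kd T' p (b-p)) else 0)"
    unfolding act_L_term1 act_L_term2 using assms by (simp add: sum.delta)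
  also have "\<dots> = complex_of_real (kd T p (a-p)) * w ((T,a-p),(T',b))
   + complex_of_real (kd T' p (b-p)) * w ((T,a),(T',b-p))" by auto
  finally show ?thesis .
qed

lemma lin_ext_cf: "lin_ext D (cf r c) = (\<lambda>z. complex_of_real r * D c z)"
proof (rule ext)
  fix z
  show "lin_ext D (cf r c) z = complex_of_real r * D c z"
  proof (cases "r = 0")
    case True then show ?thesis by (simp add: lin_ext_def cf_def)
  next
    case False
    then have "{b. cf r c b \<noteq> 0} = {c}" by (auto simp: cf_def)
    then show ?thesis by (simp add: lin_ext_def cf_def)
  qed
qed



lemma CE_homog:
  assumes H: "homog_der \<Gamma> s e D" and p: "p \<in> \<Gamma>" and q: "q \<in> \<Gamma>"
  shows "complex_of_real (p-q) * D (L,p+q) ((T,a),(T',b)) =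
     complex_of_real (kd T p (a-p)) * D (L,q) ((T,a-p),(T',b))
   + complex_of_real (kd T' p (b-p)) * D (L,q) ((T,a),(T',b-p))
   - complex_of_real (kd T q (a-q)) * D (L,p) ((T,a-q),(T',b))
   - complex_of_real (kd T' q (b-q)) * D (L,p) ((T,a),(T',b-q))"
proof -
  have H1: "\<forall>b. valid \<Gamma> s b \<longrightarrow> finite {w. D b w \<noteq> 0}
        \<and> (\<forall>a c. D b (a,c) \<noteq> 0 \<longrightarrow> valid \<Gamma> s a \<and> valid \<Gamma> s c
              \<and> (par (fst a) + par (fst c)) mod 2 = (par (fst b) + e) mod 2)"
   and H2: "\<forall>x y. valid \<Gamma> s x \<longrightarrow> valid \<Gamma> s y \<longrightarrow>
          lin_ext D (br x y) =
            (\<lambda>z. sgnc (e * par (fst x)) * act x (D y) z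
                 - sgnc (par (fst y) * (e + par (fst x))) * act y (D x) z)"
    using H unfolding homog_der_def by blast+
  have fin: "\<And>r. r\<in>\<Gamma> \<Longrightarrow> finite {w. D (L,r) w \<noteq> 0}"
    using H1 by (simp add: valid_def)
  have vp: "valid \<Gamma> s (L,p)" "valid \<Gamma> s (L,q)" using p q by (simp_all add: valid_def)
  have "lin_ext D (br (L,p) (L,q)) = (\<lambda>z. sgnc (e * par L) * act (L,p) (D (L,q)) z
     - sgnc (par L * (e + par L)) * act (L,q) (D (L,p)) z)"
    using H2[rule_format, OF vp] by simp
  then have "lin_ext D (br (L,p) (L,q)) ((T,a),(T',b)) = act (L,p) (D (L,q)) ((T,a),(T',b))
     - act (L,q) (D (L,p)) ((T,a),(T',b))"
    by (simp add: sgnc_def)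
  then show ?thesis
    by (simp add: lin_ext_cf act_L[OF fin[OF q]] act_L[OF fin[OF p]] algebra_simps)
qed

lemma kd0: "kd T 0 x = - x" by (cases T) (auto simp: kd_def)

lemma kd_zero: "kd T \<epsilon> x = 0 \<Longrightarrow> ((T = L \<or> T = I) \<and> x = \<epsilon>) \<or> ((T = G \<or> T = H) \<and> x = \<epsilon>/2)"
  by (cases T) (auto simp: kd_def)


lemma cert_adj:
  fixes Y :: "real \<Rightarrow> real \<Rightarrow> real \<Rightarrow> complex"
  assumes E: "\<And>k l m n. k \<in> S \<Longrightarrow> l \<in> S \<Longrightarrow> complex_of_real (k-l) * Y (k+l) m n = complex_of_real (2*k-m) * Y l (m-k) n + complex_of_real (2*k-n) * Y l m (n-k) - complex_of_real (2*l-m) * Y k (m-l) n - complex_of_real (2*l-n) * Y k m (n-l)"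
    and S: "S = {-2,-1,0,1,2,3}"
    and Z0: "\<And>m n. Y 0 m n = 0" and Z1: "\<And>m n. Y 1 m n = 0"
    and B: "\<And>m n. Y (-1) m n \<noteq> 0 \<Longrightarrow> (m,n) \<in> {(1,-2),(0,-1),(-1,0),(-2,1)}"
  shows "Y (-1) m n = 0"
proof -
  have e0: "((-4) * Y 0 (-6) 6 - (2 * Y 2 (-4) 6 + (-10) * Y 2 (-6) 8 + (-10) * Y (-2) (-8) 6 + 2 * Y (-2) (-6) 4)) = 0" using E[of "-2" "2" "-6" "6"] by (simp add: S)
  have e1: "((-4) * Y 0 (-5) 5 - (1 * Y 2 (-3) 5 + (-9) * Y 2 (-5) 7 + (-9) * Y (-2) (-7) 5 + 1 * Y (-2) (-5) 3)) = 0" using E[of "-2" "2" "-5" "5"] by (simp add: S)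
  have e2: "((-4) * Y 0 (-4) 4 - (0 * Y 2 (-2) 4 + (-8) * Y 2 (-4) 6 + (-8) * Y (-2) (-6) 4 + 0 * Y (-2) (-4) 2)) = 0" using E[of "-2" "2" "-4" "4"] by (simp add: S)
  have e3: "((-4) * Y 0 (-3) 3 - ((-1) * Y 2 (-1) 3 + (-7) * Y 2 (-3) 5 + (-7) * Y (-2) (-5) 3 + (-1) * Y (-2) (-3) 1)) = 0" using E[of "-2" "2" "-3" "3"] by (simp add: S)
  have e4: "((-4) * Y 0 (-2) 2 - ((-2) * Y 2 0 2 + (-6) * Y 2 (-2) 4 + (-6) * Y (-2) (-4) 2 + (-2) * Y (-2) (-2) 0)) = 0" using E[of "-2" "2" "-2" "2"] by (simp add: S)
  have e5: "((-4) * Y 0 (-1) 1 - ((-3) * Y 2 1 1 + (-5) * Y 2 (-1) 3 + (-5) * Y (-2) (-3) 1 + (-3) * Y (-2) (-1) (-1))) = 0" using E[of "-2" "2" "-1" "1"] by (simp add: S)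
  have e6: "((-4) * Y 0 0 0 - ((-4) * Y 2 2 0 + (-4) * Y 2 0 2 + (-4) * Y (-2) (-2) 0 + (-4) * Y (-2) 0 (-2))) = 0" using E[of "-2" "2" "0" "0"] by (simp add: S)
  have e7: "((-4) * Y 0 1 (-1) - ((-5) * Y 2 3 (-1) + (-3) * Y 2 1 1 + (-3) * Y (-2) (-1) (-1) + (-5) * Y (-2) 1 (-3))) = 0" using E[of "-2" "2" "1" "-1"] by (simp add: S)
  have e14: "((-5) * Y 1 (-5) 6 - (1 * Y 3 (-3) 6 + (-10) * Y 3 (-5) 8 + (-11) * Y (-2) (-8) 6 + 0 * Y (-2) (-5) 3)) = 0" using E[of "-2" "3" "-5" "6"] by (simp add: S)
  have e15: "((-5) * Y 1 (-4) 5 - (0 * Y 3 (-2) 5 + (-9) * Y 3 (-4) 7 + (-10) * Y (-2) (-7) 5 + (-1) * Y (-2) (-4) 2)) = 0" using E[of "-2" "3" "-4" "5"] by (simp add: S)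
  have e16: "((-5) * Y 1 (-3) 4 - ((-1) * Y 3 (-1) 4 + (-8) * Y 3 (-3) 6 + (-9) * Y (-2) (-6) 4 + (-2) * Y (-2) (-3) 1)) = 0" using E[of "-2" "3" "-3" "4"] by (simp add: S)
  have e17: "((-5) * Y 1 (-2) 3 - ((-2) * Y 3 0 3 + (-7) * Y 3 (-2) 5 + (-8) * Y (-2) (-5) 3 + (-3) * Y (-2) (-2) 0)) = 0" using E[of "-2" "3" "-2" "3"] by (simp add: S)
  have e18: "((-5) * Y 1 (-1) 2 - ((-3) * Y 3 1 2 + (-6) * Y 3 (-1) 4 + (-7) * Y (-2) (-4) 2 + (-4) * Y (-2) (-1) (-1))) = 0" using E[of "-2" "3" "-1" "2"] by (simp add: S)
  have e19: "((-5) * Y 1 0 1 - ((-4) * Y 3 2 1 + (-5) * Y 3 0 3 + (-6) * Y (-2) (-3) 1 + (-5) * Y (-2) 0 (-2))) = 0" using E[of "-2" "3" "0" "1"] by (simp add: S)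
  have e20: "((-5) * Y 1 1 0 - ((-5) * Y 3 3 0 + (-4) * Y 3 1 2 + (-5) * Y (-2) (-2) 0 + (-6) * Y (-2) 1 (-3))) = 0" using E[of "-2" "3" "1" "0"] by (simp add: S)
  have e27: "((-4) * Y 2 (-5) 7 - (3 * Y 3 (-4) 7 + (-9) * Y 3 (-5) 8 + (-11) * Y (-1) (-8) 7 + 1 * Y (-1) (-5) 4)) = 0" using E[of "-1" "3" "-5" "7"] by (simp add: S)
  have e28: "((-4) * Y 2 (-4) 6 - (2 * Y 3 (-3) 6 + (-8) * Y 3 (-4) 7 + (-10) * Y (-1) (-7) 6 + 0 * Y (-1) (-4) 3)) = 0" using E[of "-1" "3" "-4" "6"] by (simp add: S)
  have e29: "((-4) * Y 2 (-3) 5 - (1 * Y 3 (-2) 5 + (-7) * Y 3 (-3) 6 + (-9) * Y (-1) (-6) 5 + (-1) * Y (-1) (-3) 2)) = 0" using E[of "-1" "3" "-3" "5"] by (simp add: S)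
  have e30: "((-4) * Y 2 (-2) 4 - (0 * Y 3 (-1) 4 + (-6) * Y 3 (-2) 5 + (-8) * Y (-1) (-5) 4 + (-2) * Y (-1) (-2) 1)) = 0" using E[of "-1" "3" "-2" "4"] by (simp add: S)
  have e31: "((-4) * Y 2 (-1) 3 - ((-1) * Y 3 0 3 + (-5) * Y 3 (-1) 4 + (-7) * Y (-1) (-4) 3 + (-3) * Y (-1) (-1) 0)) = 0" using E[of "-1" "3" "-1" "3"] by (simp add: S)
  have e32: "((-4) * Y 2 0 2 - ((-2) * Y 3 1 2 + (-4) * Y 3 0 3 + (-6) * Y (-1) (-3) 2 + (-4) * Y (-1) 0 (-1))) = 0" using E[of "-1" "3" "0" "2"] by (simp add: S)
  have e33: "((-4) * Y 2 1 1 - ((-3) * Y 3 2 1 + (-3) * Y 3 1 2 + (-5) * Y (-1) (-2) 1 + (-5) * Y (-1) 1 (-2))) = 0" using E[of "-1" "3" "1" "1"] by (simp add: S)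
  have e34: "((-4) * Y 2 2 0 - ((-4) * Y 3 3 0 + (-2) * Y 3 2 1 + (-4) * Y (-1) (-1) 0 + (-6) * Y (-1) 2 (-3))) = 0" using E[of "-1" "3" "2" "0"] by (simp add: S)
  have e40: "((-1) * Y 3 (-5) 8 - (7 * Y 2 (-6) 8 + (-6) * Y 2 (-5) 7 + (-9) * Y 1 (-7) 8 + 4 * Y 1 (-5) 6)) = 0" using E[of "1" "2" "-5" "8"] by (simp add: S)
  have e41: "((-1) * Y 3 (-4) 7 - (6 * Y 2 (-5) 7 + (-5) * Y 2 (-4) 6 + (-8) * Y 1 (-6) 7 + 3 * Y 1 (-4) 5)) = 0" using E[of "1" "2" "-4" "7"] by (simp add: S)
  have e42: "((-1) * Y 3 (-3) 6 - (5 * Y 2 (-4) 6 + (-4) * Y 2 (-3) 5 + (-7) * Y 1 (-5) 6 + 2 * Y 1 (-3) 4)) = 0" using E[of "1" "2" "-3" "6"] by (simp add: S)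
  have e43: "((-1) * Y 3 (-2) 5 - (4 * Y 2 (-3) 5 + (-3) * Y 2 (-2) 4 + (-6) * Y 1 (-4) 5 + 1 * Y 1 (-2) 3)) = 0" using E[of "1" "2" "-2" "5"] by (simp add: S)
  have e44: "((-1) * Y 3 (-1) 4 - (3 * Y 2 (-2) 4 + (-2) * Y 2 (-1) 3 + (-5) * Y 1 (-3) 4 + 0 * Y 1 (-1) 2)) = 0" using E[of "1" "2" "-1" "4"] by (simp add: S)
  have e45: "((-1) * Y 3 0 3 - (2 * Y 2 (-1) 3 + (-1) * Y 2 0 2 + (-4) * Y 1 (-2) 3 + (-1) * Y 1 0 1)) = 0" using E[of "1" "2" "0" "3"] by (simp add: S)
  have e46: "((-1) * Y 3 1 2 - (1 * Y 2 0 2 + 0 * Y 2 1 1 + (-3) * Y 1 (-1) 2 + (-2) * Y 1 1 0)) = 0" using E[of "1" "2" "1" "2"] by (simp add: S)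
  have e47: "((-1) * Y 3 2 1 - (0 * Y 2 1 1 + 1 * Y 2 2 0 + (-2) * Y 1 0 1 + (-3) * Y 1 2 (-1))) = 0" using E[of "1" "2" "2" "1"] by (simp add: S)
  have e48: "((-1) * Y 3 3 0 - ((-1) * Y 2 2 0 + 2 * Y 2 3 (-1) + (-1) * Y 1 1 0 + (-4) * Y 1 3 (-2))) = 0" using E[of "1" "2" "3" "0"] by (simp add: S)
  have z0: "Y (-1) (-8) 7 = 0" using B[of "-8" "7"] by auto
  have z1: "Y (-1) (-7) 6 = 0" using B[of "-7" "6"] by auto
  have z2: "Y (-1) (-6) 5 = 0" using B[of "-6" "5"] by auto
  have z3: "Y (-1) (-5) 4 = 0" using B[of "-5" "4"] by auto
  have z4: "Y (-1) (-4) 3 = 0" using B[of "-4" "3"] by auto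
  have z5: "Y (-1) (-3) 2 = 0" using B[of "-3" "2"] by auto
  have z6: "Y (-1) 2 (-3) = 0" using B[of "2" "-3"] by auto
  have c0: "5040 * Y (-1) 1 (-2) = ((-105028) * ((-4) * Y 0 (-6) 6 - (2 * Y 2 (-4) 6 + (-10) * Y 2 (-6) 8 + (-10) * Y (-2) (-8) 6 + 2 * Y (-2) (-6) 4)) + (-2240) * ((-4) * Y 0 (-5) 5 - (1 * Y 2 (-3) 5 + (-9) * Y 2 (-5) 7 + (-9) * Y (-2) (-7) 5 + 1 * Y (-2) (-5) 3)) + (-25906) * ((-4) * Y 0 (-4) 4 - (0 * Y 2 (-2) 4 + (-8) * Y 2 (-4) 6 + (-8) * Y (-2) (-6) 4 + 0 * Y (-2) (-4) 2)) + 960 * ((-4) * Y 0 (-3) 3 - ((-1) * Y 2 (-1) 3 + (-7) * Y 2 (-3) 5 + (-7) * Y (-2) (-5) 3 + (-1) * Y (-2) (-3) 1)) + 840 * ((-4) * Y 0 (-2) 2 - ((-2) * Y 2 0 2 + (-6) * Y 2 (-2) 4 + (-6) * Y (-2) (-4) 2 + (-2) * Y (-2) (-2) 0)) + 840 * ((-4) * Y 0 (-1) 1 - ((-3) * Y 2 1 1 + (-5) * Y 2 (-1) 3 + (-5) * Y (-2) (-3) 1 + (-3) * Y (-2) (-1) (-1))) + 945 * ((-4) * Y 0 0 0 - ((-4) * Y 2 2 0 + (-4) * Y 2 0 2 + (-4) * Y (-2) (-2) 0 + (-4) * Y (-2) 0 (-2))) + 504 * ((-4) * Y 0 1 (-1)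 - ((-5) * Y 2 3 (-1) + (-3) * Y 2 1 1 + (-3) * Y (-2) (-1) (-1) + (-5) * Y (-2) 1 (-3))) + 95480 * ((-5) * Y 1 (-5) 6 - (1 * Y 3 (-3) 6 + (-10) * Y 3 (-5) 8 + (-11) * Y (-2) (-8) 6 + 0 * Y (-2) (-5) 3)) + 2016 * ((-5) * Y 1 (-4) 5 - (0 * Y 3 (-2) 5 + (-9) * Y 3 (-4) 7 + (-10) * Y (-2) (-7) 5 + (-1) * Y (-2) (-4) 2)) + (-312) * ((-5) * Y 1 (-3) 4 - ((-1) * Y 3 (-1) 4 + (-8) * Y 3 (-3) 6 + (-9) * Y (-2) (-6) 4 + (-2) * Y (-2) (-3) 1)) + (-1120) * ((-5) * Y 1 (-2) 3 - ((-2) * Y 3 0 3 + (-7) * Y 3 (-2) 5 + (-8) * Y (-2) (-5) 3 + (-3) * Y (-2) (-2) 0)) + (-1008) * ((-5) * Y 1 (-1) 2 - ((-3) * Y 3 1 2 + (-6) * Y 3 (-1) 4 + (-7) * Y (-2) (-4) 2 + (-4) * Y (-2) (-1) (-1))) + (-756) * ((-5) * Y 1 0 1 - ((-4) * Y 3 2 1 + (-5) * Y 3 0 3 + (-6) * Y (-2) (-3) 1 + (-5) * Y (-2) 0 (-2))) + (-420) * ((-5) * Y 1 1 0 - ((-5) * Y 3 3 0 + (-4) * Y 3 1 2 + (-5) * Y (-2) (-2) 0 + (-6) * Y (-2) 1 (-3))) + (-122760) * ((-4) * Y 2 (-5) 7 - (3 * Y 3 (-4) 7 + (-9) * Y 3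 (-5) 8 + (-11) * Y (-1) (-8) 7 + 1 * Y (-1) (-5) 4)) + (-57248) * ((-4) * Y 2 (-4) 6 - (2 * Y 3 (-3) 6 + (-8) * Y 3 (-4) 7 + (-10) * Y (-1) (-7) 6 + 0 * Y (-1) (-4) 3)) + (-5960) * ((-4) * Y 2 (-3) 5 - (1 * Y 3 (-2) 5 + (-7) * Y 3 (-3) 6 + (-9) * Y (-1) (-6) 5 + (-1) * Y (-1) (-3) 2)) + (-2520) * ((-4) * Y 2 (-2) 4 - (0 * Y 3 (-1) 4 + (-6) * Y 3 (-2) 5 + (-8) * Y (-1) (-5) 4 + (-2) * Y (-1) (-2) 1)) + (-1120) * ((-4) * Y 2 (-1) 3 - ((-1) * Y 3 0 3 + (-5) * Y 3 (-1) 4 + (-7) * Y (-1) (-4) 3 + (-3) * Y (-1) (-1) 0)) + 1008 * ((-4) * Y 2 1 1 - ((-3) * Y 3 2 1 + (-3) * Y 3 1 2 + (-5) * Y (-1) (-2) 1 + (-5) * Y (-1) 1 (-2))) + 840 * ((-4) * Y 2 2 0 - ((-4) * Y 3 3 0 + (-2) * Y 3 2 1 + (-4) * Y (-1) (-1) 0 + (-6) * Y (-1) 2 (-3))) + (-150040) * ((-1) * Y 3 (-5) 8 - (7 * Y 2 (-6) 8 + (-6) * Y 2 (-5) 7 + (-9) * Y 1 (-7) 8 + 4 * Y 1 (-5) 6)) + (-71560) * ((-1) * Y 3 (-4) 7 - (6 * Y 2 (-5) 7 + (-5) * Y 2 (-4) 6 + (-8) * Y 1 (-6) 7 + 3 *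 Y 1 (-4) 5)) + (-25200) * ((-1) * Y 3 (-3) 6 - (5 * Y 2 (-4) 6 + (-4) * Y 2 (-3) 5 + (-7) * Y 1 (-5) 6 + 2 * Y 1 (-3) 4)) + (-17000) * ((-1) * Y 3 (-2) 5 - (4 * Y 2 (-3) 5 + (-3) * Y 2 (-2) 4 + (-6) * Y 1 (-4) 5 + 1 * Y 1 (-2) 3)) + (-11960) * ((-1) * Y 3 (-1) 4 - (3 * Y 2 (-2) 4 + (-2) * Y 2 (-1) 3 + (-5) * Y 1 (-3) 4 + 0 * Y 1 (-1) 2)) + (-7140) * ((-1) * Y 3 0 3 - (2 * Y 2 (-1) 3 + (-1) * Y 2 0 2 + (-4) * Y 1 (-2) 3 + (-1) * Y 1 0 1)) + (-1680) * ((-1) * Y 3 1 2 - (1 * Y 2 0 2 + 0 * Y 2 1 1 + (-3) * Y 1 (-1) 2 + (-2) * Y 1 1 0)) + 1680 * ((-1) * Y 3 2 1 - (0 * Y 2 1 1 + 1 * Y 2 2 0 + (-2) * Y 1 0 1 + (-3) * Y 1 2 (-1))) + 1260 * ((-1) * Y 3 3 0 - ((-1) * Y 2 2 0 + 2 * Y 2 3 (-1) + (-1) * Y 1 1 0 + (-4) * Y 1 3 (-2)))) - (420112 * Y 0 (-6) 6 + 8960 * Y 0 (-5) 5 + 103624 * Y 0 (-4) 4 + (-3840) * Y 0 (-3) 3 + (-3360) * Y 0 (-2) 2 + (-3360) * Y 0 (-1) 1 + (-3780) * Y 0 0 0 + (-2016) * Y 0 1 (-1) + (-53640) * Y 1 (-5)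 6 + 102600 * Y 1 (-4) 5 + (-7840) * Y 1 (-3) 4 + (-5960) * Y 1 (-2) 3 + (-1350360) * Y (-1) (-8) 7 + 102600 * Y (-1) (-5) 4 + (-572480) * Y (-1) (-7) 6 + (-53640) * Y (-1) (-6) 5 + (-5960) * Y (-1) (-3) 2 + (-7840) * Y (-1) (-4) 3 + 5040 * Y (-1) 2 (-3) + (-1350360) * Y 1 (-7) 8 + (-572480) * Y 1 (-6) 7 + 5040 * Y 1 2 (-1) + 5040 * Y 1 3 (-2))" by algebra
  have a0: "((-105028) * ((-4) * Y 0 (-6) 6 - (2 * Y 2 (-4) 6 + (-10) * Y 2 (-6) 8 + (-10) * Y (-2) (-8) 6 + 2 * Y (-2) (-6) 4)) + (-2240) * ((-4) * Y 0 (-5) 5 - (1 * Y 2 (-3) 5 + (-9) * Y 2 (-5) 7 + (-9) * Y (-2) (-7) 5 + 1 * Y (-2) (-5) 3)) + (-25906) * ((-4) * Y 0 (-4) 4 - (0 * Y 2 (-2) 4 + (-8) * Y 2 (-4) 6 + (-8) * Y (-2) (-6) 4 + 0 * Y (-2) (-4) 2)) + 960 * ((-4) * Y 0 (-3) 3 - ((-1) * Y 2 (-1) 3 + (-7) * Y 2 (-3) 5 + (-7) * Y (-2) (-5) 3 + (-1) * Y (-2) (-3) 1)) + 840 * ((-4) * Y 0 (-2) 2 - ((-2) * Y 2 0 2 + (-6) * Y 2 (-2) 4 + (-6) * Y (-2) (-4) 2 + (-2) * Y (-2) (-2) 0)) + 840 * ((-4) * Y 0 (-1) 1 - ((-3)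 * Y 2 1 1 + (-5) * Y 2 (-1) 3 + (-5) * Y (-2) (-3) 1 + (-3) * Y (-2) (-1) (-1))) + 945 * ((-4) * Y 0 0 0 - ((-4) * Y 2 2 0 + (-4) * Y 2 0 2 + (-4) * Y (-2) (-2) 0 + (-4) * Y (-2) 0 (-2))) + 504 * ((-4) * Y 0 1 (-1) - ((-5) * Y 2 3 (-1) + (-3) * Y 2 1 1 + (-3) * Y (-2) (-1) (-1) + (-5) * Y (-2) 1 (-3))) + 95480 * ((-5) * Y 1 (-5) 6 - (1 * Y 3 (-3) 6 + (-10) * Y 3 (-5) 8 + (-11) * Y (-2) (-8) 6 + 0 * Y (-2) (-5) 3)) + 2016 * ((-5) * Y 1 (-4) 5 - (0 * Y 3 (-2) 5 + (-9) * Y 3 (-4) 7 + (-10) * Y (-2) (-7) 5 + (-1) * Y (-2) (-4) 2)) + (-312) * ((-5) * Y 1 (-3) 4 - ((-1) * Y 3 (-1) 4 + (-8) * Y 3 (-3) 6 + (-9) * Y (-2) (-6) 4 + (-2) * Y (-2) (-3) 1)) + (-1120) * ((-5) * Y 1 (-2) 3 - ((-2) * Y 3 0 3 + (-7) * Y 3 (-2) 5 + (-8) * Y (-2) (-5) 3 + (-3) * Y (-2) (-2) 0)) + (-1008) * ((-5) * Y 1 (-1) 2 - ((-3) * Y 3 1 2 + (-6) * Y 3 (-1) 4 + (-7) * Y (-2) (-4) 2 + (-4) * Y (-2) (-1) (-1))) + (-756) * ((-5) * Y 1 0 1 - ((-4) * Y 3 2 1 + (-5) * Y 3 0 3 + (-6)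 * Y (-2) (-3) 1 + (-5) * Y (-2) 0 (-2))) + (-420) * ((-5) * Y 1 1 0 - ((-5) * Y 3 3 0 + (-4) * Y 3 1 2 + (-5) * Y (-2) (-2) 0 + (-6) * Y (-2) 1 (-3))) + (-122760) * ((-4) * Y 2 (-5) 7 - (3 * Y 3 (-4) 7 + (-9) * Y 3 (-5) 8 + (-11) * Y (-1) (-8) 7 + 1 * Y (-1) (-5) 4)) + (-57248) * ((-4) * Y 2 (-4) 6 - (2 * Y 3 (-3) 6 + (-8) * Y 3 (-4) 7 + (-10) * Y (-1) (-7) 6 + 0 * Y (-1) (-4) 3)) + (-5960) * ((-4) * Y 2 (-3) 5 - (1 * Y 3 (-2) 5 + (-7) * Y 3 (-3) 6 + (-9) * Y (-1) (-6) 5 + (-1) * Y (-1) (-3) 2)) + (-2520) * ((-4) * Y 2 (-2) 4 - (0 * Y 3 (-1) 4 + (-6) * Y 3 (-2) 5 + (-8) * Y (-1) (-5) 4 + (-2) * Y (-1) (-2) 1)) + (-1120) * ((-4) * Y 2 (-1) 3 - ((-1) * Y 3 0 3 + (-5) * Y 3 (-1) 4 + (-7) * Y (-1) (-4) 3 + (-3) * Y (-1) (-1) 0)) + 1008 * ((-4) * Y 2 1 1 - ((-3) * Y 3 2 1 + (-3) * Y 3 1 2 + (-5) * Y (-1) (-2) 1 + (-5) * Y (-1) 1 (-2))) + 840 * ((-4) * Y 2 2 0 - ((-4) * Y 3 3 0 + (-2) * Y 3 2 1 + (-4) * Y (-1) (-1) 0 + (-6) * Y (-1) 2 (-3))) +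 (-150040) * ((-1) * Y 3 (-5) 8 - (7 * Y 2 (-6) 8 + (-6) * Y 2 (-5) 7 + (-9) * Y 1 (-7) 8 + 4 * Y 1 (-5) 6)) + (-71560) * ((-1) * Y 3 (-4) 7 - (6 * Y 2 (-5) 7 + (-5) * Y 2 (-4) 6 + (-8) * Y 1 (-6) 7 + 3 * Y 1 (-4) 5)) + (-25200) * ((-1) * Y 3 (-3) 6 - (5 * Y 2 (-4) 6 + (-4) * Y 2 (-3) 5 + (-7) * Y 1 (-5) 6 + 2 * Y 1 (-3) 4)) + (-17000) * ((-1) * Y 3 (-2) 5 - (4 * Y 2 (-3) 5 + (-3) * Y 2 (-2) 4 + (-6) * Y 1 (-4) 5 + 1 * Y 1 (-2) 3)) + (-11960) * ((-1) * Y 3 (-1) 4 - (3 * Y 2 (-2) 4 + (-2) * Y 2 (-1) 3 + (-5) * Y 1 (-3) 4 + 0 * Y 1 (-1) 2)) + (-7140) * ((-1) * Y 3 0 3 - (2 * Y 2 (-1) 3 + (-1) * Y 2 0 2 + (-4) * Y 1 (-2) 3 + (-1) * Y 1 0 1)) + (-1680) * ((-1) * Y 3 1 2 - (1 * Y 2 0 2 + 0 * Y 2 1 1 + (-3) * Y 1 (-1) 2 + (-2) * Y 1 1 0)) + 1680 * ((-1) * Y 3 2 1 - (0 * Y 2 1 1 + 1 * Y 2 2 0 + (-2) * Y 1 0 1 + (-3) * Y 1 2 (-1))) + 1260 * ((-1) * Y 3 3 0 - ((-1) * Y 2 2 0 + 2 * Y 2 3 (-1) + (-1) * Y 1 1 0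 + (-4) * Y 1 3 (-2)))) = 0" by (simp only: e0 e1 e2 e3 e4 e5 e6 e7 e14 e15 e16 e17 e18 e19 e20 e27 e28 e29 e30 e31 e33 e34 e40 e41 e42 e43 e44 e45 e46 e47 e48 mult_zero_right add_0_right add_0_left)
  have b0: "(420112 * Y 0 (-6) 6 + 8960 * Y 0 (-5) 5 + 103624 * Y 0 (-4) 4 + (-3840) * Y 0 (-3) 3 + (-3360) * Y 0 (-2) 2 + (-3360) * Y 0 (-1) 1 + (-3780) * Y 0 0 0 + (-2016) * Y 0 1 (-1) + (-53640) * Y 1 (-5) 6 + 102600 * Y 1 (-4) 5 + (-7840) * Y 1 (-3) 4 + (-5960) * Y 1 (-2) 3 + (-1350360) * Y (-1) (-8) 7 + 102600 * Y (-1) (-5) 4 + (-572480) * Y (-1) (-7) 6 + (-53640) * Y (-1) (-6) 5 + (-5960) * Y (-1) (-3) 2 + (-7840) * Y (-1) (-4) 3 + 5040 * Y (-1) 2 (-3) + (-1350360) * Y 1 (-7) 8 + (-572480) * Y 1 (-6) 7 + 5040 * Y 1 2 (-1) + 5040 * Y 1 3 (-2)) = 0" by (simp add: Z0 Z1 z0 z1 z2 z3 z4 z5 z6)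
  have "5040 * Y (-1) 1 (-2) = 0 - 0" using c0 by (simp only: a0 b0)
  then have t0: "Y (-1) 1 (-2) = 0" by simp
  have c1: "3360 * Y (-1) 0 (-1) = ((-60676) * ((-4) * Y 0 (-6) 6 - (2 * Y 2 (-4) 6 + (-10) * Y 2 (-6) 8 + (-10) * Y (-2) (-8) 6 + 2 * Y (-2) (-6) 4)) + 11200 * ((-4) * Y 0 (-5) 5 - (1 * Y 2 (-3) 5 + (-9) * Y 2 (-5) 7 + (-9) * Y (-2) (-7) 5 + 1 * Y (-2) (-5) 3)) + (-16384) * ((-4) * Y 0 (-4) 4 - (0 * Y 2 (-2) 4 + (-8) * Y 2 (-4) 6 + (-8) * Y (-2) (-6) 4 + 0 * Y (-2) (-4) 2)) + 2880 * ((-4) * Y 0 (-3) 3 - ((-1) * Y 2 (-1) 3 + (-7) * Y 2 (-3) 5 + (-7) * Y (-2) (-5) 3 + (-1) * Y (-2) (-3) 1)) + 1680 * ((-4) * Y 0 (-2) 2 - ((-2) * Y 2 0 2 + (-6) * Y 2 (-2) 4 + (-6) * Y (-2) (-4) 2 + (-2) * Y (-2) (-2) 0)) + (-504) * ((-4) * Y 0 (-1) 1 - ((-3) * Y 2 1 1 + (-5) * Y 2 (-1) 3 + (-5) * Y (-2) (-3) 1 + (-3) * Y (-2) (-1) (-1))) + 525 * ((-4) * Y 0 0 0 - ((-4) * Y 2 2 0 + (-4) * Y 2 0 2 + (-4) * Y (-2) (-2) 0 + (-4) * Y (-2) 0 (-2))) + 504 * ((-4) * Y 0 1 (-1) - ((-5)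 * Y 2 3 (-1) + (-3) * Y 2 1 1 + (-3) * Y (-2) (-1) (-1) + (-5) * Y (-2) 1 (-3))) + 55160 * ((-5) * Y 1 (-5) 6 - (1 * Y 3 (-3) 6 + (-10) * Y 3 (-5) 8 + (-11) * Y (-2) (-8) 6 + 0 * Y (-2) (-5) 3)) + (-10080) * ((-5) * Y 1 (-4) 5 - (0 * Y 3 (-2) 5 + (-9) * Y 3 (-4) 7 + (-10) * Y (-2) (-7) 5 + (-1) * Y (-2) (-4) 2)) + 1080 * ((-5) * Y 1 (-3) 4 - ((-1) * Y 3 (-1) 4 + (-8) * Y 3 (-3) 6 + (-9) * Y (-2) (-6) 4 + (-2) * Y (-2) (-3) 1)) + (-1120) * ((-5) * Y 1 (-2) 3 - ((-2) * Y 3 0 3 + (-7) * Y 3 (-2) 5 + (-8) * Y (-2) (-5) 3 + (-3) * Y (-2) (-2) 0)) + (-420) * ((-5) * Y 1 0 1 - ((-4) * Y 3 2 1 + (-5) * Y 3 0 3 + (-6) * Y (-2) (-3) 1 + (-5) * Y (-2) 0 (-2))) + (-420) * ((-5) * Y 1 1 0 - ((-5) * Y 3 3 0 + (-4) * Y 3 1 2 + (-5) * Y (-2) (-2) 0 + (-6) * Y (-2) 1 (-3))) + (-70920) * ((-4) * Y 2 (-5) 7 - (3 * Y 3 (-4) 7 + (-9) * Y 3 (-5) 8 + (-11) * Y (-1) (-8) 7 + 1 * Y (-1) (-5) 4)) + (-18080) * ((-4) * Y 2 (-4) 6 - (2 * Y 3 (-3) 6 + (-8) * Y 3 (-4) 7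 + (-10) * Y (-1) (-7) 6 + 0 * Y (-1) (-4) 3)) + 40 * ((-4) * Y 2 (-3) 5 - (1 * Y 3 (-2) 5 + (-7) * Y 3 (-3) 6 + (-9) * Y (-1) (-6) 5 + (-1) * Y (-1) (-3) 2)) + (-1120) * ((-4) * Y 2 (-1) 3 - ((-1) * Y 3 0 3 + (-5) * Y 3 (-1) 4 + (-7) * Y (-1) (-4) 3 + (-3) * Y (-1) (-1) 0)) + 840 * ((-4) * Y 2 0 2 - ((-2) * Y 3 1 2 + (-4) * Y 3 0 3 + (-6) * Y (-1) (-3) 2 + (-4) * Y (-1) 0 (-1))) + 840 * ((-4) * Y 2 2 0 - ((-4) * Y 3 3 0 + (-2) * Y 3 2 1 + (-4) * Y (-1) (-1) 0 + (-6) * Y (-1) 2 (-3))) + (-86680) * ((-1) * Y 3 (-5) 8 - (7 * Y 2 (-6) 8 + (-6) * Y 2 (-5) 7 + (-9) * Y 1 (-7) 8 + 4 * Y 1 (-5) 6)) + (-22600) * ((-1) * Y 3 (-4) 7 - (6 * Y 2 (-5) 7 + (-5) * Y 2 (-4) 6 + (-8) * Y 1 (-6) 7 + 3 * Y 1 (-4) 5)) + (-10080) * ((-1) * Y 3 (-3) 6 - (5 * Y 2 (-4) 6 + (-4) * Y 2 (-3) 5 + (-7) * Y 1 (-5) 6 + 2 * Y 1 (-3) 4)) + (-7880) * ((-1) * Y 3 (-2) 5 - (4 * Y 2 (-3) 5 + (-3) * Y 2 (-2) 4 + (-6) * Y 1 (-4) 5 + 1 * Y 1 (-2) 3)) + (-4520)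 * ((-1) * Y 3 (-1) 4 - (3 * Y 2 (-2) 4 + (-2) * Y 2 (-1) 3 + (-5) * Y 1 (-3) 4 + 0 * Y 1 (-1) 2)) + (-2100) * ((-1) * Y 3 0 3 - (2 * Y 2 (-1) 3 + (-1) * Y 2 0 2 + (-4) * Y 1 (-2) 3 + (-1) * Y 1 0 1)) + 1260 * ((-1) * Y 3 3 0 - ((-1) * Y 2 2 0 + 2 * Y 2 3 (-1) + (-1) * Y 1 1 0 + (-4) * Y 1 3 (-2)))) - (242704 * Y 0 (-6) 6 + (-44800) * Y 0 (-5) 5 + 65536 * Y 0 (-4) 4 + (-11520) * Y 0 (-3) 3 + (-6720) * Y 0 (-2) 2 + 2016 * Y 0 (-1) 1 + (-2100) * Y 0 0 0 + (-2016) * Y 0 1 (-1) + 360 * Y 1 (-5) 6 + 70920 * Y 1 (-4) 5 + (-7840) * Y 1 (-3) 4 + 5080 * Y 1 (-2) 3 + 3360 * Y 1 1 0 + (-780120) * Y (-1) (-8) 7 + 70920 * Y (-1) (-5) 4 + (-180800) * Y (-1) (-7) 6 + 360 * Y (-1) (-6) 5 + 5080 * Y (-1) (-3) 2 + (-7840) * Y (-1) (-4) 3 + 5040 * Y (-1) 2 (-3) + (-780120) * Y 1 (-7) 8 + (-180800) * Y 1 (-6) 7 + 5040 * Y 1 3 (-2))" by algebra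
  have a1: "((-60676) * ((-4) * Y 0 (-6) 6 - (2 * Y 2 (-4) 6 + (-10) * Y 2 (-6) 8 + (-10) * Y (-2) (-8) 6 + 2 * Y (-2) (-6) 4)) + 11200 * ((-4) * Y 0 (-5) 5 - (1 * Y 2 (-3) 5 + (-9) * Y 2 (-5) 7 + (-9) * Y (-2) (-7) 5 + 1 * Y (-2) (-5) 3)) + (-16384) * ((-4) * Y 0 (-4) 4 - (0 * Y 2 (-2) 4 + (-8) * Y 2 (-4) 6 + (-8) * Y (-2) (-6) 4 + 0 * Y (-2) (-4) 2)) + 2880 * ((-4) * Y 0 (-3) 3 - ((-1) * Y 2 (-1) 3 + (-7) * Y 2 (-3) 5 + (-7) * Y (-2) (-5) 3 + (-1) * Y (-2) (-3) 1)) + 1680 * ((-4) * Y 0 (-2) 2 - ((-2) * Y 2 0 2 + (-6) * Y 2 (-2) 4 + (-6) * Y (-2) (-4) 2 + (-2) * Y (-2) (-2) 0)) + (-504) * ((-4) * Y 0 (-1) 1 - ((-3) * Y 2 1 1 + (-5) * Y 2 (-1) 3 + (-5) * Y (-2) (-3) 1 + (-3) * Y (-2) (-1) (-1))) + 525 * ((-4) * Y 0 0 0 - ((-4) * Y 2 2 0 + (-4) * Y 2 0 2 + (-4) * Y (-2) (-2) 0 + (-4) * Y (-2) 0 (-2))) + 504 * ((-4) * Y 0 1 (-1) - ((-5) * Y 2 3 (-1) + (-3) * Y 2 1 1 + (-3) * Y (-2) (-1) (-1) + (-5) * Y (-2) 1 (-3))) + 55160 * ((-5) * Y 1 (-5)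 6 - (1 * Y 3 (-3) 6 + (-10) * Y 3 (-5) 8 + (-11) * Y (-2) (-8) 6 + 0 * Y (-2) (-5) 3)) + (-10080) * ((-5) * Y 1 (-4) 5 - (0 * Y 3 (-2) 5 + (-9) * Y 3 (-4) 7 + (-10) * Y (-2) (-7) 5 + (-1) * Y (-2) (-4) 2)) + 1080 * ((-5) * Y 1 (-3) 4 - ((-1) * Y 3 (-1) 4 + (-8) * Y 3 (-3) 6 + (-9) * Y (-2) (-6) 4 + (-2) * Y (-2) (-3) 1)) + (-1120) * ((-5) * Y 1 (-2) 3 - ((-2) * Y 3 0 3 + (-7) * Y 3 (-2) 5 + (-8) * Y (-2) (-5) 3 + (-3) * Y (-2) (-2) 0)) + (-420) * ((-5) * Y 1 0 1 - ((-4) * Y 3 2 1 + (-5) * Y 3 0 3 + (-6) * Y (-2) (-3) 1 + (-5) * Y (-2) 0 (-2))) + (-420) * ((-5) * Y 1 1 0 - ((-5) * Y 3 3 0 + (-4) * Y 3 1 2 + (-5) * Y (-2) (-2) 0 + (-6) * Y (-2) 1 (-3))) + (-70920) * ((-4) * Y 2 (-5) 7 - (3 * Y 3 (-4) 7 + (-9) * Y 3 (-5) 8 + (-11) * Y (-1) (-8) 7 + 1 * Y (-1) (-5) 4)) + (-18080) * ((-4) * Y 2 (-4) 6 - (2 * Y 3 (-3) 6 + (-8) * Y 3 (-4) 7 + (-10) * Y (-1) (-7) 6 + 0 * Y (-1) (-4) 3)) + 40 * ((-4) * Y 2 (-3) 5 - (1 * Y 3 (-2) 5 + (-7) * Y 3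 (-3) 6 + (-9) * Y (-1) (-6) 5 + (-1) * Y (-1) (-3) 2)) + (-1120) * ((-4) * Y 2 (-1) 3 - ((-1) * Y 3 0 3 + (-5) * Y 3 (-1) 4 + (-7) * Y (-1) (-4) 3 + (-3) * Y (-1) (-1) 0)) + 840 * ((-4) * Y 2 0 2 - ((-2) * Y 3 1 2 + (-4) * Y 3 0 3 + (-6) * Y (-1) (-3) 2 + (-4) * Y (-1) 0 (-1))) + 840 * ((-4) * Y 2 2 0 - ((-4) * Y 3 3 0 + (-2) * Y 3 2 1 + (-4) * Y (-1) (-1) 0 + (-6) * Y (-1) 2 (-3))) + (-86680) * ((-1) * Y 3 (-5) 8 - (7 * Y 2 (-6) 8 + (-6) * Y 2 (-5) 7 + (-9) * Y 1 (-7) 8 + 4 * Y 1 (-5) 6)) + (-22600) * ((-1) * Y 3 (-4) 7 - (6 * Y 2 (-5) 7 + (-5) * Y 2 (-4) 6 + (-8) * Y 1 (-6) 7 + 3 * Y 1 (-4) 5)) + (-10080) * ((-1) * Y 3 (-3) 6 - (5 * Y 2 (-4) 6 + (-4) * Y 2 (-3) 5 + (-7) * Y 1 (-5) 6 + 2 * Y 1 (-3) 4)) + (-7880) * ((-1) * Y 3 (-2) 5 - (4 * Y 2 (-3) 5 + (-3) * Y 2 (-2) 4 + (-6) * Y 1 (-4) 5 + 1 * Y 1 (-2) 3)) + (-4520) * ((-1) * Y 3 (-1) 4 - (3 * Y 2 (-2) 4 + (-2) * Y 2 (-1) 3 + (-5) * Y 1 (-3) 4 + 0 * Y 1 (-1)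 2)) + (-2100) * ((-1) * Y 3 0 3 - (2 * Y 2 (-1) 3 + (-1) * Y 2 0 2 + (-4) * Y 1 (-2) 3 + (-1) * Y 1 0 1)) + 1260 * ((-1) * Y 3 3 0 - ((-1) * Y 2 2 0 + 2 * Y 2 3 (-1) + (-1) * Y 1 1 0 + (-4) * Y 1 3 (-2)))) = 0" by (simp only: e0 e1 e2 e3 e4 e5 e6 e7 e14 e15 e16 e17 e19 e20 e27 e28 e29 e31 e32 e34 e40 e41 e42 e43 e44 e45 e48 mult_zero_right add_0_right add_0_left)
  have b1: "(242704 * Y 0 (-6) 6 + (-44800) * Y 0 (-5) 5 + 65536 * Y 0 (-4) 4 + (-11520) * Y 0 (-3) 3 + (-6720) * Y 0 (-2) 2 + 2016 * Y 0 (-1) 1 + (-2100) * Y 0 0 0 + (-2016) * Y 0 1 (-1) + 360 * Y 1 (-5) 6 + 70920 * Y 1 (-4) 5 + (-7840) * Y 1 (-3) 4 + 5080 * Y 1 (-2) 3 + 3360 * Y 1 1 0 + (-780120) * Y (-1) (-8) 7 + 70920 * Y (-1) (-5) 4 + (-180800) * Y (-1) (-7) 6 + 360 * Y (-1) (-6) 5 + 5080 * Y (-1) (-3) 2 + (-7840) * Y (-1) (-4) 3 + 5040 * Y (-1) 2 (-3) + (-780120) * Y 1 (-7) 8 + (-180800) * Y 1 (-6) 7 + 5040 * Y 1 3 (-2)) = 0" by (simp add: Z0 Z1 z0 z1 z2 z3 z4 z5 z6)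
  have "3360 * Y (-1) 0 (-1) = 0 - 0" using c1 by (simp only: a1 b1)
  then have t1: "Y (-1) 0 (-1) = 0" by simp
  have c2: "42 * Y (-1) (-1) 0 = (1001 * ((-4) * Y 0 (-6) 6 - (2 * Y 2 (-4) 6 + (-10) * Y 2 (-6) 8 + (-10) * Y (-2) (-8) 6 + 2 * Y (-2) (-6) 4)) + (-140) * ((-4) * Y 0 (-5) 5 - (1 * Y 2 (-3) 5 + (-9) * Y 2 (-5) 7 + (-9) * Y (-2) (-7) 5 + 1 * Y (-2) (-5) 3)) + 230 * ((-4) * Y 0 (-4) 4 - (0 * Y 2 (-2) 4 + (-8) * Y 2 (-4) 6 + (-8) * Y (-2) (-6) 4 + 0 * Y (-2) (-4) 2)) + (-36) * ((-4) * Y 0 (-3) 3 - ((-1) * Y 2 (-1) 3 + (-7) * Y 2 (-3) 5 + (-7) * Y (-2) (-5) 3 + (-1) * Y (-2) (-3) 1)) + (-21) * ((-4) * Y 0 (-2) 2 - ((-2) * Y 2 0 2 + (-6) * Y 2 (-2) 4 + (-6) * Y (-2) (-4) 2 + (-2) * Y (-2) (-2) 0)) + (-910) * ((-5) * Y 1 (-5) 6 - (1 * Y 3 (-3) 6 + (-10) * Y 3 (-5) 8 + (-11) * Y (-2) (-8) 6 + 0 * Y (-2) (-5) 3)) + 126 * ((-5) * Y 1 (-4) 5 - (0 * Y 3 (-2) 5 + (-9) * Y 3 (-4) 7 + (-10) * Y (-2) (-7) 5 + (-1) * Y (-2) (-4) 2)) + 18 * ((-5) * Y 1 (-3) 4 -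 ((-1) * Y 3 (-1) 4 + (-8) * Y 3 (-3) 6 + (-9) * Y (-2) (-6) 4 + (-2) * Y (-2) (-3) 1)) + 14 * ((-5) * Y 1 (-2) 3 - ((-2) * Y 3 0 3 + (-7) * Y 3 (-2) 5 + (-8) * Y (-2) (-5) 3 + (-3) * Y (-2) (-2) 0)) + 1170 * ((-4) * Y 2 (-5) 7 - (3 * Y 3 (-4) 7 + (-9) * Y 3 (-5) 8 + (-11) * Y (-1) (-8) 7 + 1 * Y (-1) (-5) 4)) + 352 * ((-4) * Y 2 (-4) 6 - (2 * Y 3 (-3) 6 + (-8) * Y 3 (-4) 7 + (-10) * Y (-1) (-7) 6 + 0 * Y (-1) (-4) 3)) + (-32) * ((-4) * Y 2 (-3) 5 - (1 * Y 3 (-2) 5 + (-7) * Y 3 (-3) 6 + (-9) * Y (-1) (-6) 5 + (-1) * Y (-1) (-3) 2)) + 14 * ((-4) * Y 2 (-1) 3 - ((-1) * Y 3 0 3 + (-5) * Y 3 (-1) 4 + (-7) * Y (-1) (-4) 3 + (-3) * Y (-1) (-1) 0)) + 1430 * ((-1) * Y 3 (-5) 8 - (7 * Y 2 (-6) 8 + (-6) * Y 2 (-5) 7 + (-9) * Y 1 (-7) 8 + 4 * Y 1 (-5) 6)) + 440 * ((-1) * Y 3 (-4) 7 - (6 * Y 2 (-5) 7 + (-5) * Y 2 (-4) 6 + (-8) * Y 1 (-6) 7 + 3 * Y 1 (-4) 5)) + 126 * ((-1) * Y 3 (-3) 6 - (5 * Y 2 (-4) 6 + (-4) * Y 2 (-3)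 5 + (-7) * Y 1 (-5) 6 + 2 * Y 1 (-3) 4)) + 130 * ((-1) * Y 3 (-2) 5 - (4 * Y 2 (-3) 5 + (-3) * Y 2 (-2) 4 + (-6) * Y 1 (-4) 5 + 1 * Y 1 (-2) 3)) + 88 * ((-1) * Y 3 (-1) 4 - (3 * Y 2 (-2) 4 + (-2) * Y 2 (-1) 3 + (-5) * Y 1 (-3) 4 + 0 * Y 1 (-1) 2)) + 42 * ((-1) * Y 3 0 3 - (2 * Y 2 (-1) 3 + (-1) * Y 2 0 2 + (-4) * Y 1 (-2) 3 + (-1) * Y 1 0 1))) - ((-4004) * Y 0 (-6) 6 + 560 * Y 0 (-5) 5 + (-920) * Y 0 (-4) 4 + 144 * Y 0 (-3) 3 + 84 * Y 0 (-2) 2 + (-288) * Y 1 (-5) 6 + (-1170) * Y 1 (-4) 5 + 98 * Y 1 (-3) 4 + (-32) * Y 1 (-2) 3 + 12870 * Y (-1) (-8) 7 + (-1170) * Y (-1) (-5) 4 + 3520 * Y (-1) (-7) 6 + (-288) * Y (-1) (-6) 5 + (-32) * Y (-1) (-3) 2 + 98 * Y (-1) (-4) 3 + 12870 * Y 1 (-7) 8 + 3520 * Y 1 (-6) 7 + 42 * Y 1 0 1)" by algebra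
  have a2: "(1001 * ((-4) * Y 0 (-6) 6 - (2 * Y 2 (-4) 6 + (-10) * Y 2 (-6) 8 + (-10) * Y (-2) (-8) 6 + 2 * Y (-2) (-6) 4)) + (-140) * ((-4) * Y 0 (-5) 5 - (1 * Y 2 (-3) 5 + (-9) * Y 2 (-5) 7 + (-9) * Y (-2) (-7) 5 + 1 * Y (-2) (-5) 3)) + 230 * ((-4) * Y 0 (-4) 4 - (0 * Y 2 (-2) 4 + (-8) * Y 2 (-4) 6 + (-8) * Y (-2) (-6) 4 + 0 * Y (-2) (-4) 2)) + (-36) * ((-4) * Y 0 (-3) 3 - ((-1) * Y 2 (-1) 3 + (-7) * Y 2 (-3) 5 + (-7) * Y (-2) (-5) 3 + (-1) * Y (-2) (-3) 1)) + (-21) * ((-4) * Y 0 (-2) 2 - ((-2) * Y 2 0 2 + (-6) * Y 2 (-2) 4 + (-6) * Y (-2) (-4) 2 + (-2) * Y (-2) (-2) 0)) + (-910) * ((-5) * Y 1 (-5) 6 - (1 * Y 3 (-3) 6 + (-10) * Y 3 (-5) 8 + (-11) * Y (-2) (-8) 6 + 0 * Y (-2) (-5) 3)) + 126 * ((-5) * Y 1 (-4) 5 - (0 * Y 3 (-2) 5 + (-9) * Y 3 (-4) 7 + (-10) * Y (-2) (-7) 5 + (-1) * Y (-2) (-4) 2)) + 18 * ((-5) * Y 1 (-3) 4 - ((-1) * Y 3 (-1) 4 + (-8) * Y 3 (-3) 6 + (-9) * Y (-2) (-6) 4 + (-2) * Y (-2) (-3) 1)) + 14 * ((-5) * Y 1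 (-2) 3 - ((-2) * Y 3 0 3 + (-7) * Y 3 (-2) 5 + (-8) * Y (-2) (-5) 3 + (-3) * Y (-2) (-2) 0)) + 1170 * ((-4) * Y 2 (-5) 7 - (3 * Y 3 (-4) 7 + (-9) * Y 3 (-5) 8 + (-11) * Y (-1) (-8) 7 + 1 * Y (-1) (-5) 4)) + 352 * ((-4) * Y 2 (-4) 6 - (2 * Y 3 (-3) 6 + (-8) * Y 3 (-4) 7 + (-10) * Y (-1) (-7) 6 + 0 * Y (-1) (-4) 3)) + (-32) * ((-4) * Y 2 (-3) 5 - (1 * Y 3 (-2) 5 + (-7) * Y 3 (-3) 6 + (-9) * Y (-1) (-6) 5 + (-1) * Y (-1) (-3) 2)) + 14 * ((-4) * Y 2 (-1) 3 - ((-1) * Y 3 0 3 + (-5) * Y 3 (-1) 4 + (-7) * Y (-1) (-4) 3 + (-3) * Y (-1) (-1) 0)) + 1430 * ((-1) * Y 3 (-5) 8 - (7 * Y 2 (-6) 8 + (-6) * Y 2 (-5) 7 + (-9) * Y 1 (-7) 8 + 4 * Y 1 (-5) 6)) + 440 * ((-1) * Y 3 (-4) 7 - (6 * Y 2 (-5) 7 + (-5) * Y 2 (-4) 6 + (-8) * Y 1 (-6) 7 + 3 * Y 1 (-4) 5)) + 126 * ((-1) * Y 3 (-3) 6 - (5 * Y 2 (-4) 6 + (-4) * Y 2 (-3) 5 + (-7) * Y 1 (-5) 6 + 2 * Y 1 (-3) 4)) + 130 * ((-1) * Y 3 (-2) 5 - (4 * Y 2 (-3) 5 + (-3) * Y 2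 (-2) 4 + (-6) * Y 1 (-4) 5 + 1 * Y 1 (-2) 3)) + 88 * ((-1) * Y 3 (-1) 4 - (3 * Y 2 (-2) 4 + (-2) * Y 2 (-1) 3 + (-5) * Y 1 (-3) 4 + 0 * Y 1 (-1) 2)) + 42 * ((-1) * Y 3 0 3 - (2 * Y 2 (-1) 3 + (-1) * Y 2 0 2 + (-4) * Y 1 (-2) 3 + (-1) * Y 1 0 1))) = 0" by (simp only: e0 e1 e2 e3 e4 e14 e15 e16 e17 e27 e28 e29 e31 e40 e41 e42 e43 e44 e45 mult_zero_right add_0_right add_0_left)
  have b2: "((-4004) * Y 0 (-6) 6 + 560 * Y 0 (-5) 5 + (-920) * Y 0 (-4) 4 + 144 * Y 0 (-3) 3 + 84 * Y 0 (-2) 2 + (-288) * Y 1 (-5) 6 + (-1170) * Y 1 (-4) 5 + 98 * Y 1 (-3) 4 + (-32) * Y 1 (-2) 3 + 12870 * Y (-1) (-8) 7 + (-1170) * Y (-1) (-5) 4 + 3520 * Y (-1) (-7) 6 + (-288) * Y (-1) (-6) 5 + (-32) * Y (-1) (-3) 2 + 98 * Y (-1) (-4) 3 + 12870 * Y 1 (-7) 8 + 3520 * Y 1 (-6) 7 + 42 * Y 1 0 1) = 0" by (simp add: Z0 Z1 z0 z1 z2 z3 z4 z5 z6)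
  have "42 * Y (-1) (-1) 0 = 0 - 0" using c2 by (simp only: a2 b2)
  then have t2: "Y (-1) (-1) 0 = 0" by simp
  have c3: "5040 * Y (-1) (-2) 1 = (5236 * ((-4) * Y 0 (-6) 6 - (2 * Y 2 (-4) 6 + (-10) * Y 2 (-6) 8 + (-10) * Y (-2) (-8) 6 + 2 * Y (-2) (-6) 4)) + 5600 * ((-4) * Y 0 (-5) 5 - (1 * Y 2 (-3) 5 + (-9) * Y 2 (-5) 7 + (-9) * Y (-2) (-7) 5 + 1 * Y (-2) (-5) 3)) + 4954 * ((-4) * Y 0 (-4) 4 - (0 * Y 2 (-2) 4 + (-8) * Y 2 (-4) 6 + (-8) * Y (-2) (-6) 4 + 0 * Y (-2) (-4) 2)) + 1440 * ((-4) * Y 0 (-3) 3 - ((-1) * Y 2 (-1) 3 + (-7) * Y 2 (-3) 5 + (-7) * Y (-2) (-5) 3 + (-1) * Y (-2) (-3) 1)) + 840 * ((-4) * Y 0 (-2) 2 - ((-2) * Y 2 0 2 + (-6) * Y 2 (-2) 4 + (-6) * Y (-2) (-4) 2 + (-2) * Y (-2) (-2) 0)) + 504 * ((-4) * Y 0 (-1) 1 - ((-3) * Y 2 1 1 + (-5) * Y 2 (-1) 3 + (-5) * Y (-2) (-3) 1 + (-3) * Y (-2) (-1) (-1))) + (-525) * ((-4) * Y 0 0 0 - ((-4) * Y 2 2 0 + (-4) * Y 2 0 2 + (-4) * Y (-2) (-2) 0 + (-4) * Y (-2) 0 (-2))) + (-504) * ((-4) * Y 0 1 (-1) - ((-5)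 * Y 2 3 (-1) + (-3) * Y 2 1 1 + (-3) * Y (-2) (-1) (-1) + (-5) * Y (-2) 1 (-3))) + (-4760) * ((-5) * Y 1 (-5) 6 - (1 * Y 3 (-3) 6 + (-10) * Y 3 (-5) 8 + (-11) * Y (-2) (-8) 6 + 0 * Y (-2) (-5) 3)) + (-5040) * ((-5) * Y 1 (-4) 5 - (0 * Y 3 (-2) 5 + (-9) * Y 3 (-4) 7 + (-10) * Y (-2) (-7) 5 + (-1) * Y (-2) (-4) 2)) + (-3240) * ((-5) * Y 1 (-3) 4 - ((-1) * Y 3 (-1) 4 + (-8) * Y 3 (-3) 6 + (-9) * Y (-2) (-6) 4 + (-2) * Y (-2) (-3) 1)) + (-560) * ((-5) * Y 1 (-2) 3 - ((-2) * Y 3 0 3 + (-7) * Y 3 (-2) 5 + (-8) * Y (-2) (-5) 3 + (-3) * Y (-2) (-2) 0)) + 420 * ((-5) * Y 1 0 1 - ((-4) * Y 3 2 1 + (-5) * Y 3 0 3 + (-6) * Y (-2) (-3) 1 + (-5) * Y (-2) 0 (-2))) + 420 * ((-5) * Y 1 1 0 - ((-5) * Y 3 3 0 + (-4) * Y 3 1 2 + (-5) * Y (-2) (-2) 0 + (-6) * Y (-2) 1 (-3))) + 6120 * ((-4) * Y 2 (-5) 7 - (3 * Y 3 (-4) 7 + (-9) * Y 3 (-5) 8 + (-11) * Y (-1) (-8) 7 + 1 * Y (-1) (-5) 4)) + 9440 * ((-4) * Y 2 (-4) 6 - (2 * Y 3 (-3) 6 + (-8) * Y 3 (-4) 7 +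 (-10) * Y (-1) (-7) 6 + 0 * Y (-1) (-4) 3)) + 7160 * ((-4) * Y 2 (-3) 5 - (1 * Y 3 (-2) 5 + (-7) * Y 3 (-3) 6 + (-9) * Y (-1) (-6) 5 + (-1) * Y (-1) (-3) 2)) + 2520 * ((-4) * Y 2 (-2) 4 - (0 * Y 3 (-1) 4 + (-6) * Y 3 (-2) 5 + (-8) * Y (-1) (-5) 4 + (-2) * Y (-1) (-2) 1)) + 1120 * ((-4) * Y 2 (-1) 3 - ((-1) * Y 3 0 3 + (-5) * Y 3 (-1) 4 + (-7) * Y (-1) (-4) 3 + (-3) * Y (-1) (-1) 0)) + (-840) * ((-4) * Y 2 2 0 - ((-4) * Y 3 3 0 + (-2) * Y 3 2 1 + (-4) * Y (-1) (-1) 0 + (-6) * Y (-1) 2 (-3))) + 7480 * ((-1) * Y 3 (-5) 8 - (7 * Y 2 (-6) 8 + (-6) * Y 2 (-5) 7 + (-9) * Y 1 (-7) 8 + 4 * Y 1 (-5) 6)) + 11800 * ((-1) * Y 3 (-4) 7 - (6 * Y 2 (-5) 7 + (-5) * Y 2 (-4) 6 + (-8) * Y 1 (-6) 7 + 3 * Y 1 (-4) 5)) + 10080 * ((-1) * Y 3 (-3) 6 - (5 * Y 2 (-4) 6 + (-4) * Y 2 (-3) 5 + (-7) * Y 1 (-5) 6 + 2 * Y 1 (-3) 4)) + 4040 * ((-1) * Y 3 (-2) 5 - (4 * Y 2 (-3) 5 + (-3) * Y 2 (-2) 4 + (-6) * Y 1 (-4) 5 + 1 * Y 1 (-2) 3))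 + 2360 * ((-1) * Y 3 (-1) 4 - (3 * Y 2 (-2) 4 + (-2) * Y 2 (-1) 3 + (-5) * Y 1 (-3) 4 + 0 * Y 1 (-1) 2)) + 2100 * ((-1) * Y 3 0 3 - (2 * Y 2 (-1) 3 + (-1) * Y 2 0 2 + (-4) * Y 1 (-2) 3 + (-1) * Y 1 0 1)) + 1680 * ((-1) * Y 3 1 2 - (1 * Y 2 0 2 + 0 * Y 2 1 1 + (-3) * Y 1 (-1) 2 + (-2) * Y 1 1 0)) + (-1260) * ((-1) * Y 3 3 0 - ((-1) * Y 2 2 0 + 2 * Y 2 3 (-1) + (-1) * Y 1 1 0 + (-4) * Y 1 3 (-2)))) - ((-20944) * Y 0 (-6) 6 + (-22400) * Y 0 (-5) 5 + (-19816) * Y 0 (-4) 4 + (-5760) * Y 0 (-3) 3 + (-3360) * Y 0 (-2) 2 + (-2016) * Y 0 (-1) 1 + 2100 * Y 0 0 0 + 2016 * Y 0 1 (-1) + 64440 * Y 1 (-5) 6 + 14040 * Y 1 (-4) 5 + 7840 * Y 1 (-3) 4 + 7160 * Y 1 (-2) 3 + 67320 * Y (-1) (-8) 7 + 14040 * Y (-1) (-5) 4 + 94400 * Y (-1) (-7) 6 + 64440 * Y (-1) (-6) 5 + 7160 * Y (-1) (-3) 2 + 7840 * Y (-1) (-4) 3 + (-5040) * Y (-1) 2 (-3) + 67320 * Y 1 (-7) 8 + 94400 * Y 1 (-6) 7 + 5040 * Y 1 (-1) 2 + (-5040) * Y 1 3 (-2))" by algebra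
  have a3: "(5236 * ((-4) * Y 0 (-6) 6 - (2 * Y 2 (-4) 6 + (-10) * Y 2 (-6) 8 + (-10) * Y (-2) (-8) 6 + 2 * Y (-2) (-6) 4)) + 5600 * ((-4) * Y 0 (-5) 5 - (1 * Y 2 (-3) 5 + (-9) * Y 2 (-5) 7 + (-9) * Y (-2) (-7) 5 + 1 * Y (-2) (-5) 3)) + 4954 * ((-4) * Y 0 (-4) 4 - (0 * Y 2 (-2) 4 + (-8) * Y 2 (-4) 6 + (-8) * Y (-2) (-6) 4 + 0 * Y (-2) (-4) 2)) + 1440 * ((-4) * Y 0 (-3) 3 - ((-1) * Y 2 (-1) 3 + (-7) * Y 2 (-3) 5 + (-7) * Y (-2) (-5) 3 + (-1) * Y (-2) (-3) 1)) + 840 * ((-4) * Y 0 (-2) 2 - ((-2) * Y 2 0 2 + (-6) * Y 2 (-2) 4 + (-6) * Y (-2) (-4) 2 + (-2) * Y (-2) (-2) 0)) + 504 * ((-4) * Y 0 (-1) 1 - ((-3) * Y 2 1 1 + (-5) * Y 2 (-1) 3 + (-5) * Y (-2) (-3) 1 + (-3) * Y (-2) (-1) (-1))) + (-525) * ((-4) * Y 0 0 0 - ((-4) * Y 2 2 0 + (-4) * Y 2 0 2 + (-4) * Y (-2) (-2) 0 + (-4) * Y (-2) 0 (-2))) + (-504) * ((-4) * Y 0 1 (-1) - ((-5) * Y 2 3 (-1) + (-3) * Y 2 1 1 + (-3) * Y (-2) (-1) (-1) + (-5) * Y (-2) 1 (-3))) + (-4760) * ((-5) * Y 1 (-5) 6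 - (1 * Y 3 (-3) 6 + (-10) * Y 3 (-5) 8 + (-11) * Y (-2) (-8) 6 + 0 * Y (-2) (-5) 3)) + (-5040) * ((-5) * Y 1 (-4) 5 - (0 * Y 3 (-2) 5 + (-9) * Y 3 (-4) 7 + (-10) * Y (-2) (-7) 5 + (-1) * Y (-2) (-4) 2)) + (-3240) * ((-5) * Y 1 (-3) 4 - ((-1) * Y 3 (-1) 4 + (-8) * Y 3 (-3) 6 + (-9) * Y (-2) (-6) 4 + (-2) * Y (-2) (-3) 1)) + (-560) * ((-5) * Y 1 (-2) 3 - ((-2) * Y 3 0 3 + (-7) * Y 3 (-2) 5 + (-8) * Y (-2) (-5) 3 + (-3) * Y (-2) (-2) 0)) + 420 * ((-5) * Y 1 0 1 - ((-4) * Y 3 2 1 + (-5) * Y 3 0 3 + (-6) * Y (-2) (-3) 1 + (-5) * Y (-2) 0 (-2))) + 420 * ((-5) * Y 1 1 0 - ((-5) * Y 3 3 0 + (-4) * Y 3 1 2 + (-5) * Y (-2) (-2) 0 + (-6) * Y (-2) 1 (-3))) + 6120 * ((-4) * Y 2 (-5) 7 - (3 * Y 3 (-4) 7 + (-9) * Y 3 (-5) 8 + (-11) * Y (-1) (-8) 7 + 1 * Y (-1) (-5) 4)) + 9440 * ((-4) * Y 2 (-4) 6 - (2 * Y 3 (-3) 6 + (-8) * Y 3 (-4) 7 + (-10) * Y (-1) (-7) 6 + 0 * Y (-1) (-4) 3)) + 7160 * ((-4) * Y 2 (-3) 5 - (1 * Y 3 (-2) 5 + (-7) * Y 3 (-3)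 6 + (-9) * Y (-1) (-6) 5 + (-1) * Y (-1) (-3) 2)) + 2520 * ((-4) * Y 2 (-2) 4 - (0 * Y 3 (-1) 4 + (-6) * Y 3 (-2) 5 + (-8) * Y (-1) (-5) 4 + (-2) * Y (-1) (-2) 1)) + 1120 * ((-4) * Y 2 (-1) 3 - ((-1) * Y 3 0 3 + (-5) * Y 3 (-1) 4 + (-7) * Y (-1) (-4) 3 + (-3) * Y (-1) (-1) 0)) + (-840) * ((-4) * Y 2 2 0 - ((-4) * Y 3 3 0 + (-2) * Y 3 2 1 + (-4) * Y (-1) (-1) 0 + (-6) * Y (-1) 2 (-3))) + 7480 * ((-1) * Y 3 (-5) 8 - (7 * Y 2 (-6) 8 + (-6) * Y 2 (-5) 7 + (-9) * Y 1 (-7) 8 + 4 * Y 1 (-5) 6)) + 11800 * ((-1) * Y 3 (-4) 7 - (6 * Y 2 (-5) 7 + (-5) * Y 2 (-4) 6 + (-8) * Y 1 (-6) 7 + 3 * Y 1 (-4) 5)) + 10080 * ((-1) * Y 3 (-3) 6 - (5 * Y 2 (-4) 6 + (-4) * Y 2 (-3) 5 + (-7) * Y 1 (-5) 6 + 2 * Y 1 (-3) 4)) + 4040 * ((-1) * Y 3 (-2) 5 - (4 * Y 2 (-3) 5 + (-3) * Y 2 (-2) 4 + (-6) * Y 1 (-4) 5 + 1 * Y 1 (-2) 3)) + 2360 * ((-1) * Y 3 (-1) 4 - (3 * Y 2 (-2) 4 + (-2) * Y 2 (-1) 3 + (-5) * Y 1 (-3) 4 + 0 * Y 1 (-1) 2))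 + 2100 * ((-1) * Y 3 0 3 - (2 * Y 2 (-1) 3 + (-1) * Y 2 0 2 + (-4) * Y 1 (-2) 3 + (-1) * Y 1 0 1)) + 1680 * ((-1) * Y 3 1 2 - (1 * Y 2 0 2 + 0 * Y 2 1 1 + (-3) * Y 1 (-1) 2 + (-2) * Y 1 1 0)) + (-1260) * ((-1) * Y 3 3 0 - ((-1) * Y 2 2 0 + 2 * Y 2 3 (-1) + (-1) * Y 1 1 0 + (-4) * Y 1 3 (-2)))) = 0" by (simp only: e0 e1 e2 e3 e4 e5 e6 e7 e14 e15 e16 e17 e19 e20 e27 e28 e29 e30 e31 e34 e40 e41 e42 e43 e44 e45 e46 e48 mult_zero_right add_0_right add_0_left)
  have b3: "((-20944) * Y 0 (-6) 6 + (-22400) * Y 0 (-5) 5 + (-19816) * Y 0 (-4) 4 + (-5760) * Y 0 (-3) 3 + (-3360) * Y 0 (-2) 2 + (-2016) * Y 0 (-1) 1 + 2100 * Y 0 0 0 + 2016 * Y 0 1 (-1) + 64440 * Y 1 (-5) 6 + 14040 * Y 1 (-4) 5 + 7840 * Y 1 (-3) 4 + 7160 * Y 1 (-2) 3 + 67320 * Y (-1) (-8) 7 + 14040 * Y (-1) (-5) 4 + 94400 * Y (-1) (-7) 6 + 64440 * Y (-1) (-6) 5 + 7160 * Y (-1) (-3) 2 + 7840 * Y (-1) (-4) 3 + (-5040) * Y (-1) 2 (-3) + 67320 * Y 1 (-7) 8 + 94400 * Y 1 (-6) 7 + 5040 * Y 1 (-1) 2 + (-5040) * Y 1 3 (-2))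 = 0" by (simp add: Z0 Z1 z0 z1 z2 z3 z4 z5 z6)
  have "5040 * Y (-1) (-2) 1 = 0 - 0" using c3 by (simp only: a3 b3)
  then have t3: "Y (-1) (-2) 1 = 0" by simp
  show ?thesis using B[of m n] t0 t1 t2 t3 by (cases "Y (-1) m n = 0") auto
qed

lemma cert_den:
  fixes Y :: "real \<Rightarrow> real \<Rightarrow> real \<Rightarrow> complex"
  assumes E: "\<And>k l m n. k \<in> S \<Longrightarrow> l \<in> S \<Longrightarrow> complex_of_real (2*(k-l)) * Y (k+l) m n = complex_of_real (3*k-m) * Y l (m-2*k) n + complex_of_real (3*k-n) * Y l m (n-2*k) - complex_of_real (3*l-m) * Y k (m-2*l) n - complex_of_real (3*l-n) * Y k m (n-2*l)"
    and S: "S = {-2,-1,0,1,2,3}"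
    and Z0: "\<And>m n. Y 0 m n = 0" and Z1: "\<And>m n. Y 1 m n = 0"
    and B: "\<And>m n. Y (-1) m n \<noteq> 0 \<Longrightarrow> (m,n) \<in> {(1,-3),(-1,-1),(-3,1)}"
  shows "Y (-1) m n = 0"
proof -
  have e0: "((-8) * Y 0 (-11) 11 - (5 * Y 2 (-7) 11 + (-17) * Y 2 (-11) 15 + (-17) * Y (-2) (-15) 11 + 5 * Y (-2) (-11) 7)) = 0" using E[of "-2" "2" "-11" "11"] by (simp add: S)
  have e1: "((-8) * Y 0 (-9) 9 - (3 * Y 2 (-5) 9 + (-15) * Y 2 (-9) 13 + (-15) * Y (-2) (-13) 9 + 3 * Y (-2) (-9) 5)) = 0" using E[of "-2" "2" "-9" "9"] by (simp add: S)
  have e2: "((-8) * Y 0 (-7) 7 - (1 * Y 2 (-3) 7 + (-13) * Y 2 (-7) 11 + (-13) * Y (-2) (-11) 7 + 1 * Y (-2) (-7) 3)) = 0" using E[of "-2" "2" "-7" "7"] by (simp add: S)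
  have e3: "((-8) * Y 0 (-5) 5 - ((-1) * Y 2 (-1) 5 + (-11) * Y 2 (-5) 9 + (-11) * Y (-2) (-9) 5 + (-1) * Y (-2) (-5) 1)) = 0" using E[of "-2" "2" "-5" "5"] by (simp add: S)
  have e4: "((-8) * Y 0 (-3) 3 - ((-3) * Y 2 1 3 + (-9) * Y 2 (-3) 7 + (-9) * Y (-2) (-7) 3 + (-3) * Y (-2) (-3) (-1))) = 0" using E[of "-2" "2" "-3" "3"] by (simp add: S)
  have e5: "((-8) * Y 0 (-1) 1 - ((-5) * Y 2 3 1 + (-7) * Y 2 (-1) 5 + (-7) * Y (-2) (-5) 1 + (-5) * Y (-2) (-1) (-3))) = 0" using E[of "-2" "2" "-1" "1"] by (simp add: S)
  have e6: "((-8) * Y 0 1 (-1) - ((-7) * Y 2 5 (-1) + (-5) * Y 2 1 3 + (-5) * Y (-2) (-3) (-1) + (-7) * Y (-2) 1 (-5))) = 0" using E[of "-2" "2" "1" "-1"] by (simp add: S)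
  have e13: "((-10) * Y 1 (-9) 11 - (3 * Y 3 (-5) 11 + (-17) * Y 3 (-9) 15 + (-18) * Y (-2) (-15) 11 + 2 * Y (-2) (-9) 5)) = 0" using E[of "-2" "3" "-9" "11"] by (simp add: S)
  have e14: "((-10) * Y 1 (-7) 9 - (1 * Y 3 (-3) 9 + (-15) * Y 3 (-7) 13 + (-16) * Y (-2) (-13) 9 + 0 * Y (-2) (-7) 3)) = 0" using E[of "-2" "3" "-7" "9"] by (simp add: S)
  have e15: "((-10) * Y 1 (-5) 7 - ((-1) * Y 3 (-1) 7 + (-13) * Y 3 (-5) 11 + (-14) * Y (-2) (-11) 7 + (-2) * Y (-2) (-5) 1)) = 0" using E[of "-2" "3" "-5" "7"] by (simp add: S)
  have e16: "((-10) * Y 1 (-3) 5 - ((-3) * Y 3 1 5 + (-11) * Y 3 (-3) 9 + (-12) * Y (-2) (-9) 5 + (-4) * Y (-2) (-3) (-1))) = 0" using E[of "-2" "3" "-3" "5"] by (simp add: S)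
  have e17: "((-10) * Y 1 (-1) 3 - ((-5) * Y 3 3 3 + (-9) * Y 3 (-1) 7 + (-10) * Y (-2) (-7) 3 + (-6) * Y (-2) (-1) (-3))) = 0" using E[of "-2" "3" "-1" "3"] by (simp add: S)
  have e18: "((-10) * Y 1 1 1 - ((-7) * Y 3 5 1 + (-7) * Y 3 1 5 + (-8) * Y (-2) (-5) 1 + (-8) * Y (-2) 1 (-5))) = 0" using E[of "-2" "3" "1" "1"] by (simp add: S)
  have e25: "((-8) * Y 2 (-9) 13 - (6 * Y 3 (-7) 13 + (-16) * Y 3 (-9) 15 + (-18) * Y (-1) (-15) 13 + 4 * Y (-1) (-9) 7)) = 0" using E[of "-1" "3" "-9" "13"] by (simp add: S)
  have e26: "((-8) * Y 2 (-7) 11 - (4 * Y 3 (-5) 11 + (-14) * Y 3 (-7) 13 + (-16) * Y (-1) (-13) 11 + 2 * Y (-1) (-7) 5)) = 0" using E[of "-1" "3" "-7" "11"] by (simp add: S)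
  have e27: "((-8) * Y 2 (-5) 9 - (2 * Y 3 (-3) 9 + (-12) * Y 3 (-5) 11 + (-14) * Y (-1) (-11) 9 + 0 * Y (-1) (-5) 3)) = 0" using E[of "-1" "3" "-5" "9"] by (simp add: S)
  have e28: "((-8) * Y 2 (-3) 7 - (0 * Y 3 (-1) 7 + (-10) * Y 3 (-3) 9 + (-12) * Y (-1) (-9) 7 + (-2) * Y (-1) (-3) 1)) = 0" using E[of "-1" "3" "-3" "7"] by (simp add: S)
  have e29: "((-8) * Y 2 (-1) 5 - ((-2) * Y 3 1 5 + (-8) * Y 3 (-1) 7 + (-10) * Y (-1) (-7) 5 + (-4) * Y (-1) (-1) (-1))) = 0" using E[of "-1" "3" "-1" "5"] by (simp add: S)
  have e30: "((-8) * Y 2 1 3 - ((-4) * Y 3 3 3 + (-6) * Y 3 1 5 + (-8) * Y (-1) (-5) 3 + (-6) * Y (-1) 1 (-3))) = 0" using E[of "-1" "3" "1" "3"] by (simp add: S)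
  have e31: "((-8) * Y 2 3 1 - ((-6) * Y 3 5 1 + (-4) * Y 3 3 3 + (-6) * Y (-1) (-3) 1 + (-8) * Y (-1) 3 (-5))) = 0" using E[of "-1" "3" "3" "1"] by (simp add: S)
  have e37: "((-2) * Y 3 (-9) 15 - (12 * Y 2 (-11) 15 + (-12) * Y 2 (-9) 13 + (-15) * Y 1 (-13) 15 + 9 * Y 1 (-9) 11)) = 0" using E[of "1" "2" "-9" "15"] by (simp add: S)
  have e38: "((-2) * Y 3 (-7) 13 - (10 * Y 2 (-9) 13 + (-10) * Y 2 (-7) 11 + (-13) * Y 1 (-11) 13 + 7 * Y 1 (-7) 9)) = 0" using E[of "1" "2" "-7" "13"] by (simp add: S)
  have e39: "((-2) * Y 3 (-5) 11 - (8 * Y 2 (-7) 11 + (-8) * Y 2 (-5) 9 + (-11) * Y 1 (-9) 11 + 5 * Y 1 (-5) 7)) = 0" using E[of "1" "2" "-5" "11"] by (simp add: S)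
  have e40: "((-2) * Y 3 (-3) 9 - (6 * Y 2 (-5) 9 + (-6) * Y 2 (-3) 7 + (-9) * Y 1 (-7) 9 + 3 * Y 1 (-3) 5)) = 0" using E[of "1" "2" "-3" "9"] by (simp add: S)
  have e41: "((-2) * Y 3 (-1) 7 - (4 * Y 2 (-3) 7 + (-4) * Y 2 (-1) 5 + (-7) * Y 1 (-5) 7 + 1 * Y 1 (-1) 3)) = 0" using E[of "1" "2" "-1" "7"] by (simp add: S)
  have e42: "((-2) * Y 3 1 5 - (2 * Y 2 (-1) 5 + (-2) * Y 2 1 3 + (-5) * Y 1 (-3) 5 + (-1) * Y 1 1 1)) = 0" using E[of "1" "2" "1" "5"] by (simp add: S)
  have e43: "((-2) * Y 3 3 3 - (0 * Y 2 1 3 + 0 * Y 2 3 1 + (-3) * Y 1 (-1) 3 + (-3) * Y 1 3 (-1))) = 0" using E[of "1" "2" "3" "3"] by (simp add: S)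
  have e44: "((-2) * Y 3 5 1 - ((-2) * Y 2 3 1 + 2 * Y 2 5 (-1) + (-1) * Y 1 1 1 + (-5) * Y 1 5 (-3))) = 0" using E[of "1" "2" "5" "1"] by (simp add: S)
  have z0: "Y (-1) (-15) 13 = 0" using B[of "-15" "13"] by auto
  have z1: "Y (-1) (-13) 11 = 0" using B[of "-13" "11"] by auto
  have z2: "Y (-1) (-11) 9 = 0" using B[of "-11" "9"] by auto
  have z3: "Y (-1) (-9) 7 = 0" using B[of "-9" "7"] by auto
  have z4: "Y (-1) (-7) 5 = 0" using B[of "-7" "5"] by auto
  have z5: "Y (-1) (-5) 3 = 0" using B[of "-5" "3"] by auto
  have z6: "Y (-1) 3 (-5) = 0" using B[of "3" "-5"] by auto
  have c0: "143802 * Y (-1) 1 (-3) = (1763640 * ((-8) * Y 0 (-11) 11 - (5 * Y 2 (-7) 11 + (-17) * Y 2 (-11) 15 + (-17) * Y (-2) (-15) 11 + 5 * Y (-2) (-11) 7)) + (-272608) * ((-8) * Y 0 (-9) 9 - (3 * Y 2 (-5) 9 + (-15) * Y 2 (-9) 13 + (-15) * Y (-2) (-13) 9 + 3 * Y (-2) (-9) 5)) + 486648 * ((-8) * Y 0 (-7) 7 - (1 * Y 2 (-3) 7 + (-13) * Y 2 (-7) 11 + (-13) * Y (-2) (-11) 7 + 1 * Y (-2) (-7) 3)) + (-339336) * ((-8) * Y 0 (-5) 5 - ((-1) * Y 2 (-1) 5 + (-11) * Y 2 (-5) 9 + (-11) * Y (-2) (-9) 5 + (-1) * Y (-2) (-5)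 1)) + 49872 * ((-8) * Y 0 (-3) 3 - ((-3) * Y 2 1 3 + (-9) * Y 2 (-3) 7 + (-9) * Y (-2) (-7) 3 + (-3) * Y (-2) (-3) (-1))) + (-4536) * ((-8) * Y 0 (-1) 1 - ((-5) * Y 2 3 1 + (-7) * Y 2 (-1) 5 + (-7) * Y (-2) (-5) 1 + (-5) * Y (-2) (-1) (-3))) + (-2160) * ((-8) * Y 0 1 (-1) - ((-7) * Y 2 5 (-1) + (-5) * Y 2 1 3 + (-5) * Y (-2) (-3) (-1) + (-7) * Y (-2) 1 (-5))) + (-1665660) * ((-10) * Y 1 (-9) 11 - (3 * Y 3 (-5) 11 + (-17) * Y 3 (-9) 15 + (-18) * Y (-2) (-15) 11 + 2 * Y (-2) (-9) 5)) + 255570 * ((-10) * Y 1 (-7) 9 - (1 * Y 3 (-3) 9 + (-15) * Y 3 (-7) 13 + (-16) * Y (-2) (-13) 9 + 0 * Y (-2) (-7) 3)) + 177984 * ((-10) * Y 1 (-5) 7 - ((-1) * Y 3 (-1) 7 + (-13) * Y 3 (-5) 11 + (-14) * Y (-2) (-11) 7 + (-2) * Y (-2) (-5) 1)) + (-34704) * ((-10) * Y 1 (-3) 5 - ((-3) * Y 3 1 5 + (-11) * Y 3 (-3) 9 + (-12) * Y (-2) (-9) 5 + (-4) * Y (-2) (-3) (-1))) + 3780 * ((-10) * Y 1 (-1) 3 - ((-5) * Y 3 3 3 + (-9) * Y 3 (-1) 7 + (-10) * Y (-2) (-7) 3 + (-6) * Y (-2) (-1) (-3))) + 1890 * ((-10)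 * Y 1 1 1 - ((-7) * Y 3 5 1 + (-7) * Y 3 1 5 + (-8) * Y (-2) (-5) 1 + (-8) * Y (-2) 1 (-5))) + 2082075 * ((-8) * Y 2 (-9) 13 - (6 * Y 3 (-7) 13 + (-16) * Y 3 (-9) 15 + (-18) * Y (-1) (-15) 13 + 4 * Y (-1) (-9) 7)) + 750438 * ((-8) * Y 2 (-7) 11 - (4 * Y 3 (-5) 11 + (-14) * Y 3 (-7) 13 + (-16) * Y (-1) (-13) 11 + 2 * Y (-1) (-7) 5)) + (-343650) * ((-8) * Y 2 (-5) 9 - (2 * Y 3 (-3) 9 + (-12) * Y 3 (-5) 11 + (-14) * Y (-1) (-11) 9 + 0 * Y (-1) (-5) 3)) + 14175 * ((-8) * Y 2 (-3) 7 - (0 * Y 3 (-1) 7 + (-10) * Y 3 (-3) 9 + (-12) * Y (-1) (-9) 7 + (-2) * Y (-1) (-3) 1)) + 23967 * ((-8) * Y 2 1 3 - ((-4) * Y 3 3 3 + (-6) * Y 3 1 5 + (-8) * Y (-1) (-5) 3 + (-6) * Y (-1) 1 (-3))) + (-4725) * ((-8) * Y 2 3 1 - ((-6) * Y 3 5 1 + (-4) * Y 3 3 3 + (-6) * Y (-1) (-3) 1 + (-8) * Y (-1) 3 (-5))) + 2498490 * ((-2) * Y 3 (-9) 15 - (12 * Y 2 (-11) 15 + (-12) * Y 2 (-9) 13 + (-15) * Y 1 (-13) 15 + 9 * Y 1 (-9) 11)) + 923616 * ((-2) * Y 3 (-7) 13 - (10 * Y 2 (-9) 13 + (-10) * Y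 2 (-7) 11 + (-13) * Y 1 (-11) 13 + 7 * Y 1 (-7) 9)) + 92610 * ((-2) * Y 3 (-5) 11 - (8 * Y 2 (-7) 11 + (-8) * Y 2 (-5) 9 + (-11) * Y 1 (-9) 11 + 5 * Y 1 (-5) 7)) + 95868 * ((-2) * Y 3 (-3) 9 - (6 * Y 2 (-5) 9 + (-6) * Y 2 (-3) 7 + (-9) * Y 1 (-7) 9 + 3 * Y 1 (-3) 5)) + 106002 * ((-2) * Y 3 (-1) 7 - (4 * Y 2 (-3) 7 + (-4) * Y 2 (-1) 5 + (-7) * Y 1 (-5) 7 + 1 * Y 1 (-1) 3)) + 26460 * ((-2) * Y 3 1 5 - (2 * Y 2 (-1) 5 + (-2) * Y 2 1 3 + (-5) * Y 1 (-3) 5 + (-1) * Y 1 1 1)) + 47934 * ((-2) * Y 3 3 3 - (0 * Y 2 1 3 + 0 * Y 2 3 1 + (-3) * Y 1 (-1) 3 + (-3) * Y 1 3 (-1))) + (-7560) * ((-2) * Y 3 5 1 - ((-2) * Y 2 3 1 + 2 * Y 2 5 (-1) + (-1) * Y 1 1 1 + (-5) * Y 1 5 (-3)))) - ((-14109120) * Y 0 (-11) 11 + 2180864 * Y 0 (-9) 9 + (-3893184) * Y 0 (-7) 7 + 2714688 * Y 0 (-5) 5 + (-398976) * Y 0 (-3) 3 + 36288 * Y 0 (-1) 1 + 17280 * Y 0 1 (-1) + (-4811100) * Y 1 (-9) 11 + (-8158200) * Y 1 (-7) 9 + (-1500876) * Y 1 (-5) 7 + 191736 * Y 1 (-3) 5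 + 37477350 * Y (-1) (-15) 13 + (-8158200) * Y (-1) (-9) 7 + 12007008 * Y (-1) (-13) 11 + (-1500876) * Y (-1) (-7) 5 + (-4811100) * Y (-1) (-11) 9 + 191736 * Y (-1) (-5) 3 + (-37800) * Y (-1) 3 (-5) + 37477350 * Y 1 (-13) 15 + 12007008 * Y 1 (-11) 13 + 143802 * Y 1 3 (-1) + (-37800) * Y 1 5 (-3))" by algebra
  have a0: "(1763640 * ((-8) * Y 0 (-11) 11 - (5 * Y 2 (-7) 11 + (-17) * Y 2 (-11) 15 + (-17) * Y (-2) (-15) 11 + 5 * Y (-2) (-11) 7)) + (-272608) * ((-8) * Y 0 (-9) 9 - (3 * Y 2 (-5) 9 + (-15) * Y 2 (-9) 13 + (-15) * Y (-2) (-13) 9 + 3 * Y (-2) (-9) 5)) + 486648 * ((-8) * Y 0 (-7) 7 - (1 * Y 2 (-3) 7 + (-13) * Y 2 (-7) 11 + (-13) * Y (-2) (-11) 7 + 1 * Y (-2) (-7) 3)) + (-339336) * ((-8) * Y 0 (-5) 5 - ((-1) * Y 2 (-1) 5 + (-11) * Y 2 (-5) 9 + (-11) * Y (-2) (-9) 5 + (-1) * Y (-2) (-5) 1)) + 49872 * ((-8) * Y 0 (-3) 3 - ((-3) * Y 2 1 3 + (-9) * Y 2 (-3) 7 + (-9) * Y (-2) (-7) 3 + (-3) * Y (-2) (-3) (-1))) + (-4536) * ((-8) * Y 0 (-1) 1 - ((-5) * Y 2 3 1 + (-7) * Y 2 (-1) 5 + (-7) * Y (-2) (-5) 1 + (-5)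 * Y (-2) (-1) (-3))) + (-2160) * ((-8) * Y 0 1 (-1) - ((-7) * Y 2 5 (-1) + (-5) * Y 2 1 3 + (-5) * Y (-2) (-3) (-1) + (-7) * Y (-2) 1 (-5))) + (-1665660) * ((-10) * Y 1 (-9) 11 - (3 * Y 3 (-5) 11 + (-17) * Y 3 (-9) 15 + (-18) * Y (-2) (-15) 11 + 2 * Y (-2) (-9) 5)) + 255570 * ((-10) * Y 1 (-7) 9 - (1 * Y 3 (-3) 9 + (-15) * Y 3 (-7) 13 + (-16) * Y (-2) (-13) 9 + 0 * Y (-2) (-7) 3)) + 177984 * ((-10) * Y 1 (-5) 7 - ((-1) * Y 3 (-1) 7 + (-13) * Y 3 (-5) 11 + (-14) * Y (-2) (-11) 7 + (-2) * Y (-2) (-5) 1)) + (-34704) * ((-10) * Y 1 (-3) 5 - ((-3) * Y 3 1 5 + (-11) * Y 3 (-3) 9 + (-12) * Y (-2) (-9) 5 + (-4) * Y (-2) (-3) (-1))) + 3780 * ((-10) * Y 1 (-1) 3 - ((-5) * Y 3 3 3 + (-9) * Y 3 (-1) 7 + (-10) * Y (-2) (-7) 3 + (-6) * Y (-2) (-1) (-3))) + 1890 * ((-10) * Y 1 1 1 - ((-7) * Y 3 5 1 + (-7) * Y 3 1 5 + (-8) * Y (-2) (-5) 1 + (-8) * Y (-2) 1 (-5))) + 2082075 * ((-8) * Y 2 (-9) 13 - (6 * Y 3 (-7) 13 + (-16) * Y 3 (-9) 15 + (-18) * Y (-1) (-15) 13 + 4 * Y (-1) (-9) 7)) + 750438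 * ((-8) * Y 2 (-7) 11 - (4 * Y 3 (-5) 11 + (-14) * Y 3 (-7) 13 + (-16) * Y (-1) (-13) 11 + 2 * Y (-1) (-7) 5)) + (-343650) * ((-8) * Y 2 (-5) 9 - (2 * Y 3 (-3) 9 + (-12) * Y 3 (-5) 11 + (-14) * Y (-1) (-11) 9 + 0 * Y (-1) (-5) 3)) + 14175 * ((-8) * Y 2 (-3) 7 - (0 * Y 3 (-1) 7 + (-10) * Y 3 (-3) 9 + (-12) * Y (-1) (-9) 7 + (-2) * Y (-1) (-3) 1)) + 23967 * ((-8) * Y 2 1 3 - ((-4) * Y 3 3 3 + (-6) * Y 3 1 5 + (-8) * Y (-1) (-5) 3 + (-6) * Y (-1) 1 (-3))) + (-4725) * ((-8) * Y 2 3 1 - ((-6) * Y 3 5 1 + (-4) * Y 3 3 3 + (-6) * Y (-1) (-3) 1 + (-8) * Y (-1) 3 (-5))) + 2498490 * ((-2) * Y 3 (-9) 15 - (12 * Y 2 (-11) 15 + (-12) * Y 2 (-9) 13 + (-15) * Y 1 (-13) 15 + 9 * Y 1 (-9) 11)) + 923616 * ((-2) * Y 3 (-7) 13 - (10 * Y 2 (-9) 13 + (-10) * Y 2 (-7) 11 + (-13) * Y 1 (-11) 13 + 7 * Y 1 (-7) 9)) + 92610 * ((-2) * Y 3 (-5) 11 - (8 * Y 2 (-7) 11 + (-8) * Y 2 (-5) 9 + (-11) * Y 1 (-9) 11 + 5 * Y 1 (-5) 7)) + 95868 * ((-2) * Y 3 (-3) 9 - (6 * Y 2 (-5) 9 +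 (-6) * Y 2 (-3) 7 + (-9) * Y 1 (-7) 9 + 3 * Y 1 (-3) 5)) + 106002 * ((-2) * Y 3 (-1) 7 - (4 * Y 2 (-3) 7 + (-4) * Y 2 (-1) 5 + (-7) * Y 1 (-5) 7 + 1 * Y 1 (-1) 3)) + 26460 * ((-2) * Y 3 1 5 - (2 * Y 2 (-1) 5 + (-2) * Y 2 1 3 + (-5) * Y 1 (-3) 5 + (-1) * Y 1 1 1)) + 47934 * ((-2) * Y 3 3 3 - (0 * Y 2 1 3 + 0 * Y 2 3 1 + (-3) * Y 1 (-1) 3 + (-3) * Y 1 3 (-1))) + (-7560) * ((-2) * Y 3 5 1 - ((-2) * Y 2 3 1 + 2 * Y 2 5 (-1) + (-1) * Y 1 1 1 + (-5) * Y 1 5 (-3)))) = 0" by (simp only: e0 e1 e2 e3 e4 e5 e6 e13 e14 e15 e16 e17 e18 e25 e26 e27 e28 e30 e31 e37 e38 e39 e40 e41 e42 e43 e44 mult_zero_right add_0_right add_0_left)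
  have b0: "((-14109120) * Y 0 (-11) 11 + 2180864 * Y 0 (-9) 9 + (-3893184) * Y 0 (-7) 7 + 2714688 * Y 0 (-5) 5 + (-398976) * Y 0 (-3) 3 + 36288 * Y 0 (-1) 1 + 17280 * Y 0 1 (-1) + (-4811100) * Y 1 (-9) 11 + (-8158200) * Y 1 (-7) 9 + (-1500876) * Y 1 (-5) 7 + 191736 * Y 1 (-3) 5 + 37477350 * Y (-1) (-15) 13 + (-8158200) * Y (-1) (-9) 7 + 12007008 * Y (-1) (-13) 11 + (-1500876) * Y (-1) (-7) 5 + (-4811100) * Y (-1) (-11) 9 + 191736 * Y (-1) (-5) 3 + (-37800) * Y (-1) 3 (-5) + 37477350 * Y 1 (-13) 15 + 12007008 * Y 1 (-11) 13 + 143802 * Y 1 3 (-1) + (-37800) * Y 1 5 (-3)) = 0" by (simp add: Z0 Z1 z0 z1 z2 z3 z4 z5 z6)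
  have "143802 * Y (-1) 1 (-3) = 0 - 0" using c0 by (simp only: a0 b0)
  then have t0: "Y (-1) 1 (-3) = 0" by simp
  have c1: "1438020 * Y (-1) (-1) (-1) = ((-42841440) * ((-8) * Y 0 (-11) 11 - (5 * Y 2 (-7) 11 + (-17) * Y 2 (-11) 15 + (-17) * Y (-2) (-15) 11 + 5 * Y (-2) (-11) 7)) + 18101792 * ((-8) * Y 0 (-9) 9 - (3 * Y 2 (-5) 9 + (-15) * Y 2 (-9) 13 + (-15) * Y (-2) (-13) 9 + 3 * Y (-2) (-9) 5)) + (-10665000) * ((-8) * Y 0 (-7) 7 - (1 * Y 2 (-3) 7 + (-13) * Y 2 (-7) 11 + (-13) * Y (-2) (-11) 7 + 1 * Y (-2) (-7) 3)) + 11177136 * ((-8) * Y 0 (-5) 5 - ((-1) * Y 2 (-1) 5 + (-11) * Y 2 (-5) 9 + (-11) * Y (-2) (-9) 5 + (-1) * Y (-2) (-5) 1)) + (-1281600) * ((-8) * Y 0 (-3) 3 - ((-3) * Y 2 1 3 + (-9) * Y 2 (-3) 7 + (-9) * Y (-2) (-7) 3 + (-3) * Y (-2) (-3) (-1))) + (-104328) * ((-8) * Y 0 (-1) 1 - ((-5) * Y 2 3 1 + (-7) * Y 2 (-1) 5 + (-7) * Y (-2) (-5) 1 + (-5) * Y (-2) (-1) (-3))) + (-49680) * ((-8) * Y 0 1 (-1) - ((-7) * Y 2 5 (-1) + (-5) * Y 2 1 3 + (-5) * Y (-2) (-3) (-1) + (-7) * Y (-2) 1 (-5))) + 40461360 *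 ((-10) * Y 1 (-9) 11 - (3 * Y 3 (-5) 11 + (-17) * Y 3 (-9) 15 + (-18) * Y (-2) (-15) 11 + 2 * Y (-2) (-9) 5)) + (-16970430) * ((-10) * Y 1 (-7) 9 - (1 * Y 3 (-3) 9 + (-15) * Y 3 (-7) 13 + (-16) * Y (-2) (-13) 9 + 0 * Y (-2) (-7) 3)) + (-5397300) * ((-10) * Y 1 (-5) 7 - ((-1) * Y 3 (-1) 7 + (-13) * Y 3 (-5) 11 + (-14) * Y (-2) (-11) 7 + (-2) * Y (-2) (-5) 1)) + 1023300 * ((-10) * Y 1 (-3) 5 - ((-3) * Y 3 1 5 + (-11) * Y 3 (-3) 9 + (-12) * Y (-2) (-9) 5 + (-4) * Y (-2) (-3) (-1))) + 86940 * ((-10) * Y 1 (-1) 3 - ((-5) * Y 3 3 3 + (-9) * Y 3 (-1) 7 + (-10) * Y (-2) (-7) 3 + (-6) * Y (-2) (-1) (-3))) + 43470 * ((-10) * Y 1 1 1 - ((-7) * Y 3 5 1 + (-7) * Y 3 1 5 + (-8) * Y (-2) (-5) 1 + (-8) * Y (-2) 1 (-5))) + (-50576700) * ((-8) * Y 2 (-9) 13 - (6 * Y 3 (-7) 13 + (-16) * Y 3 (-9) 15 + (-18) * Y (-1) (-15) 13 + 4 * Y (-1) (-9) 7)) + (-4238325) * ((-8) * Y 2 (-7) 11 - (4 * Y 3 (-5) 11 + (-14) * Y 3 (-7) 13 + (-16) * Y (-1) (-13) 11 + 2 * Y (-1) (-7) 5)) + 15743490 * ((-8) * Y 2 (-5)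 9 - (2 * Y 3 (-3) 9 + (-12) * Y 3 (-5) 11 + (-14) * Y (-1) (-11) 9 + 0 * Y (-1) (-5) 3)) + 326025 * ((-8) * Y 2 (-3) 7 - (0 * Y 3 (-1) 7 + (-10) * Y 3 (-3) 9 + (-12) * Y (-1) (-9) 7 + (-2) * Y (-1) (-3) 1)) + 359505 * ((-8) * Y 2 (-1) 5 - ((-2) * Y 3 1 5 + (-8) * Y 3 (-1) 7 + (-10) * Y (-1) (-7) 5 + (-4) * Y (-1) (-1) (-1))) + (-108675) * ((-8) * Y 2 3 1 - ((-6) * Y 3 5 1 + (-4) * Y 3 3 3 + (-6) * Y (-1) (-3) 1 + (-8) * Y (-1) 3 (-5))) + (-60692040) * ((-2) * Y 3 (-9) 15 - (12 * Y 2 (-11) 15 + (-12) * Y 2 (-9) 13 + (-15) * Y 1 (-13) 15 + 9 * Y 1 (-9) 11)) + (-5216400) * ((-2) * Y 3 (-7) 13 - (10 * Y 2 (-9) 13 + (-10) * Y 2 (-7) 11 + (-13) * Y 1 (-11) 13 + 7 * Y 1 (-7) 9)) + 7163100 * ((-2) * Y 3 (-5) 11 - (8 * Y 2 (-7) 11 + (-8) * Y 2 (-5) 9 + (-11) * Y 1 (-9) 11 + 5 * Y 1 (-5) 7)) + (-869400) * ((-2) * Y 3 (-1) 7 - (4 * Y 2 (-3) 7 + (-4) * Y 2 (-1) 5 + (-7) * Y 1 (-5) 7 + 1 * Y 1 (-1) 3)) + 2046600 * ((-2) * Y 3 1 5 - (2 * Y 2 (-1) 5 + (-2) * Y 2 1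 3 + (-5) * Y 1 (-3) 5 + (-1) * Y 1 1 1)) + (-173880) * ((-2) * Y 3 5 1 - ((-2) * Y 2 3 1 + 2 * Y 2 5 (-1) + (-1) * Y 1 1 1 + (-5) * Y 1 5 (-3)))) - (342731520 * Y 0 (-11) 11 + (-144814336) * Y 0 (-9) 9 + 85320000 * Y 0 (-7) 7 + (-89417088) * Y 0 (-5) 5 + 10252800 * Y 0 (-3) 3 + 834624 * Y 0 (-1) 1 + 397440 * Y 0 1 (-1) + 220408860 * Y 1 (-9) 11 + 206219100 * Y 1 (-7) 9 + 12071700 * Y 1 (-5) 7 + 1438020 * Y 1 1 1 + (-910380600) * Y (-1) (-15) 13 + 206219100 * Y (-1) (-9) 7 + (-67813200) * Y (-1) (-13) 11 + 12071700 * Y (-1) (-7) 5 + 220408860 * Y (-1) (-11) 9 + (-869400) * Y (-1) 3 (-5) + (-910380600) * Y 1 (-13) 15 + (-67813200) * Y 1 (-11) 13 + (-869400) * Y 1 5 (-3))" by algebra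
  have a1: "((-42841440) * ((-8) * Y 0 (-11) 11 - (5 * Y 2 (-7) 11 + (-17) * Y 2 (-11) 15 + (-17) * Y (-2) (-15) 11 + 5 * Y (-2) (-11) 7)) + 18101792 * ((-8) * Y 0 (-9) 9 - (3 * Y 2 (-5) 9 + (-15) * Y 2 (-9) 13 + (-15) * Y (-2) (-13) 9 + 3 * Y (-2) (-9) 5)) + (-10665000) * ((-8) * Y 0 (-7) 7 - (1 * Y 2 (-3) 7 + (-13) * Y 2 (-7) 11 + (-13) * Y (-2) (-11) 7 + 1 * Y (-2) (-7) 3)) + 11177136 * ((-8) * Y 0 (-5) 5 - ((-1) * Y 2 (-1) 5 + (-11) * Y 2 (-5) 9 + (-11) * Y (-2) (-9) 5 + (-1) * Y (-2) (-5) 1)) + (-1281600) * ((-8) * Y 0 (-3) 3 - ((-3) * Y 2 1 3 + (-9) * Y 2 (-3) 7 + (-9) * Y (-2) (-7) 3 + (-3) * Y (-2) (-3) (-1))) + (-104328) * ((-8) * Y 0 (-1) 1 - ((-5) * Y 2 3 1 + (-7) * Y 2 (-1) 5 + (-7) * Y (-2) (-5) 1 + (-5) * Y (-2) (-1) (-3))) + (-49680) * ((-8) * Y 0 1 (-1) - ((-7) * Y 2 5 (-1) + (-5) * Y 2 1 3 + (-5) * Y (-2) (-3) (-1) + (-7) * Y (-2) 1 (-5))) + 40461360 * ((-10) * Y 1 (-9) 11 - (3 * Y 3 (-5) 11 + (-17) * Y 3 (-9) 15 + (-18) * Y (-2) (-15) 11 + 2 * Y (-2) (-9) 5)) + (-16970430)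 * ((-10) * Y 1 (-7) 9 - (1 * Y 3 (-3) 9 + (-15) * Y 3 (-7) 13 + (-16) * Y (-2) (-13) 9 + 0 * Y (-2) (-7) 3)) + (-5397300) * ((-10) * Y 1 (-5) 7 - ((-1) * Y 3 (-1) 7 + (-13) * Y 3 (-5) 11 + (-14) * Y (-2) (-11) 7 + (-2) * Y (-2) (-5) 1)) + 1023300 * ((-10) * Y 1 (-3) 5 - ((-3) * Y 3 1 5 + (-11) * Y 3 (-3) 9 + (-12) * Y (-2) (-9) 5 + (-4) * Y (-2) (-3) (-1))) + 86940 * ((-10) * Y 1 (-1) 3 - ((-5) * Y 3 3 3 + (-9) * Y 3 (-1) 7 + (-10) * Y (-2) (-7) 3 + (-6) * Y (-2) (-1) (-3))) + 43470 * ((-10) * Y 1 1 1 - ((-7) * Y 3 5 1 + (-7) * Y 3 1 5 + (-8) * Y (-2) (-5) 1 + (-8) * Y (-2) 1 (-5))) + (-50576700) * ((-8) * Y 2 (-9) 13 - (6 * Y 3 (-7) 13 + (-16) * Y 3 (-9) 15 + (-18) * Y (-1) (-15) 13 + 4 * Y (-1) (-9) 7)) + (-4238325) * ((-8) * Y 2 (-7) 11 - (4 * Y 3 (-5) 11 + (-14) * Y 3 (-7) 13 + (-16) * Y (-1) (-13) 11 + 2 * Y (-1) (-7) 5)) + 15743490 * ((-8) * Y 2 (-5) 9 - (2 * Y 3 (-3) 9 + (-12) * Y 3 (-5) 11 + (-14) * Y (-1) (-11) 9 + 0 * Y (-1) (-5) 3)) + 326025 * ((-8) * Y 2 (-3)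 7 - (0 * Y 3 (-1) 7 + (-10) * Y 3 (-3) 9 + (-12) * Y (-1) (-9) 7 + (-2) * Y (-1) (-3) 1)) + 359505 * ((-8) * Y 2 (-1) 5 - ((-2) * Y 3 1 5 + (-8) * Y 3 (-1) 7 + (-10) * Y (-1) (-7) 5 + (-4) * Y (-1) (-1) (-1))) + (-108675) * ((-8) * Y 2 3 1 - ((-6) * Y 3 5 1 + (-4) * Y 3 3 3 + (-6) * Y (-1) (-3) 1 + (-8) * Y (-1) 3 (-5))) + (-60692040) * ((-2) * Y 3 (-9) 15 - (12 * Y 2 (-11) 15 + (-12) * Y 2 (-9) 13 + (-15) * Y 1 (-13) 15 + 9 * Y 1 (-9) 11)) + (-5216400) * ((-2) * Y 3 (-7) 13 - (10 * Y 2 (-9) 13 + (-10) * Y 2 (-7) 11 + (-13) * Y 1 (-11) 13 + 7 * Y 1 (-7) 9)) + 7163100 * ((-2) * Y 3 (-5) 11 - (8 * Y 2 (-7) 11 + (-8) * Y 2 (-5) 9 + (-11) * Y 1 (-9) 11 + 5 * Y 1 (-5) 7)) + (-869400) * ((-2) * Y 3 (-1) 7 - (4 * Y 2 (-3) 7 + (-4) * Y 2 (-1) 5 + (-7) * Y 1 (-5) 7 + 1 * Y 1 (-1) 3)) + 2046600 * ((-2) * Y 3 1 5 - (2 * Y 2 (-1) 5 + (-2) * Y 2 1 3 + (-5) * Y 1 (-3) 5 + (-1) * Y 1 1 1)) + (-173880) * ((-2) * Y 3 5 1 - ((-2) * Y 2 3 1 + 2 * Y 2 5 (-1) + (-1)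 * Y 1 1 1 + (-5) * Y 1 5 (-3)))) = 0" by (simp only: e0 e1 e2 e3 e4 e5 e6 e13 e14 e15 e16 e17 e18 e25 e26 e27 e28 e29 e31 e37 e38 e39 e41 e42 e44 mult_zero_right add_0_right add_0_left)
  have b1: "(342731520 * Y 0 (-11) 11 + (-144814336) * Y 0 (-9) 9 + 85320000 * Y 0 (-7) 7 + (-89417088) * Y 0 (-5) 5 + 10252800 * Y 0 (-3) 3 + 834624 * Y 0 (-1) 1 + 397440 * Y 0 1 (-1) + 220408860 * Y 1 (-9) 11 + 206219100 * Y 1 (-7) 9 + 12071700 * Y 1 (-5) 7 + 1438020 * Y 1 1 1 + (-910380600) * Y (-1) (-15) 13 + 206219100 * Y (-1) (-9) 7 + (-67813200) * Y (-1) (-13) 11 + 12071700 * Y (-1) (-7) 5 + 220408860 * Y (-1) (-11) 9 + (-869400) * Y (-1) 3 (-5) + (-910380600) * Y 1 (-13) 15 + (-67813200) * Y 1 (-11) 13 + (-869400) * Y 1 5 (-3)) = 0" by (simp add: Z0 Z1 z0 z1 z2 z3 z4 z5 z6)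
  have "1438020 * Y (-1) (-1) (-1) = 0 - 0" using c1 by (simp only: a1 b1)
  then have t1: "Y (-1) (-1) (-1) = 0" by simp
  have c2: "719010 * Y (-1) (-3) 1 = (7433640 * ((-8) * Y 0 (-11) 11 - (5 * Y 2 (-7) 11 + (-17) * Y 2 (-11) 15 + (-17) * Y (-2) (-15) 11 + 5 * Y (-2) (-11) 7)) + (-4353472) * ((-8) * Y 0 (-9) 9 - (3 * Y 2 (-5) 9 + (-15) * Y 2 (-9) 13 + (-15) * Y (-2) (-13) 9 + 3 * Y (-2) (-9) 5)) + 1889280 * ((-8) * Y 0 (-7) 7 - (1 * Y 2 (-3) 7 + (-13) * Y 2 (-7) 11 + (-13) * Y (-2) (-11) 7 + 1 * Y (-2) (-7) 3)) + (-2155896) * ((-8) * Y 0 (-5) 5 - ((-1) * Y 2 (-1) 5 + (-11) * Y 2 (-5) 9 + (-11) * Y (-2) (-9) 5 + (-1) * Y (-2) (-5) 1)) + 299520 * ((-8) * Y 0 (-3) 3 - ((-3) * Y 2 1 3 + (-9) * Y 2 (-3) 7 + (-9) * Y (-2) (-7) 3 + (-3) * Y (-2) (-3) (-1))) + 96768 * ((-8) * Y 0 (-1) 1 - ((-5) * Y 2 3 1 + (-7) * Y 2 (-1) 5 + (-7) * Y (-2) (-5) 1 + (-5) * Y (-2) (-1) (-3))) + 46080 * ((-8) * Y 0 1 (-1) - ((-7) * Y 2 5 (-1) + (-5) * Y 2 1 3 + (-5) * Y (-2) (-3) (-1) + (-7) * Y (-2) 1 (-5))) + (-7020660) * ((-10)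 * Y 1 (-9) 11 - (3 * Y 3 (-5) 11 + (-17) * Y 3 (-9) 15 + (-18) * Y (-2) (-15) 11 + 2 * Y (-2) (-9) 5)) + 4081380 * ((-10) * Y 1 (-7) 9 - (1 * Y 3 (-3) 9 + (-15) * Y 3 (-7) 13 + (-16) * Y (-2) (-13) 9 + 0 * Y (-2) (-7) 3)) + 900540 * ((-10) * Y 1 (-5) 7 - ((-1) * Y 3 (-1) 7 + (-13) * Y 3 (-5) 11 + (-14) * Y (-2) (-11) 7 + (-2) * Y (-2) (-5) 1)) + (-282240) * ((-10) * Y 1 (-3) 5 - ((-3) * Y 3 1 5 + (-11) * Y 3 (-3) 9 + (-12) * Y (-2) (-9) 5 + (-4) * Y (-2) (-3) (-1))) + (-80640) * ((-10) * Y 1 (-1) 3 - ((-5) * Y 3 3 3 + (-9) * Y 3 (-1) 7 + (-10) * Y (-2) (-7) 3 + (-6) * Y (-2) (-1) (-3))) + (-40320) * ((-10) * Y 1 1 1 - ((-7) * Y 3 5 1 + (-7) * Y 3 1 5 + (-8) * Y (-2) (-5) 1 + (-8) * Y (-2) 1 (-5))) + 8775825 * ((-8) * Y 2 (-9) 13 - (6 * Y 3 (-7) 13 + (-16) * Y 3 (-9) 15 + (-18) * Y (-1) (-15) 13 + 4 * Y (-1) (-9) 7)) + (-742365) * ((-8) * Y 2 (-7) 11 - (4 * Y 3 (-5) 11 + (-14) * Y 3 (-7) 13 + (-16) * Y (-1) (-13) 11 + 2 * Y (-1) (-7) 5)) + (-3307485) * ((-8) * Y 2 (-5) 9 - (2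 * Y 3 (-3) 9 + (-12) * Y 3 (-5) 11 + (-14) * Y (-1) (-11) 9 + 0 * Y (-1) (-5) 3)) + 57105 * ((-8) * Y 2 (-3) 7 - (0 * Y 3 (-1) 7 + (-10) * Y 3 (-3) 9 + (-12) * Y (-1) (-9) 7 + (-2) * Y (-1) (-3) 1)) + 100800 * ((-8) * Y 2 3 1 - ((-6) * Y 3 5 1 + (-4) * Y 3 3 3 + (-6) * Y (-1) (-3) 1 + (-8) * Y (-1) 3 (-5))) + 10530990 * ((-2) * Y 3 (-9) 15 - (12 * Y 2 (-11) 15 + (-12) * Y 2 (-9) 13 + (-15) * Y 1 (-13) 15 + 9 * Y 1 (-9) 11)) + (-913680) * ((-2) * Y 3 (-7) 13 - (10 * Y 2 (-9) 13 + (-10) * Y 2 (-7) 11 + (-13) * Y 1 (-11) 13 + 7 * Y 1 (-7) 9)) + (-1975680) * ((-2) * Y 3 (-5) 11 - (8 * Y 2 (-7) 11 + (-8) * Y 2 (-5) 9 + (-11) * Y 1 (-9) 11 + 5 * Y 1 (-5) 7)) + 87390 * ((-2) * Y 3 (-1) 7 - (4 * Y 2 (-3) 7 + (-4) * Y 2 (-1) 5 + (-7) * Y 1 (-5) 7 + 1 * Y 1 (-1) 3)) + (-564480) * ((-2) * Y 3 1 5 - (2 * Y 2 (-1) 5 + (-2) * Y 2 1 3 + (-5) * Y 1 (-3) 5 + (-1) * Y 1 1 1)) + 161280 * ((-2) * Y 3 5 1 - ((-2) * Y 2 3 1 + 2 * Y 2 5 (-1) + (-1) * Y 1 1 1 +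 (-5) * Y 1 5 (-3)))) - ((-59469120) * Y 0 (-11) 11 + 34827776 * Y 0 (-9) 9 + (-15114240) * Y 0 (-7) 7 + 17247168 * Y 0 (-5) 5 + (-2396160) * Y 0 (-3) 3 + (-774144) * Y 0 (-1) 1 + (-368640) * Y 0 1 (-1) + (-46304790) * Y 1 (-9) 11 + (-34418040) * Y 1 (-7) 9 + 1484730 * Y 1 (-5) 7 + 719010 * Y 1 (-1) 3 + 157964850 * Y (-1) (-15) 13 + (-34418040) * Y (-1) (-9) 7 + (-11877840) * Y (-1) (-13) 11 + 1484730 * Y (-1) (-7) 5 + (-46304790) * Y (-1) (-11) 9 + 806400 * Y (-1) 3 (-5) + 157964850 * Y 1 (-13) 15 + (-11877840) * Y 1 (-11) 13 + 806400 * Y 1 5 (-3))" by algebra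
  have a2: "(7433640 * ((-8) * Y 0 (-11) 11 - (5 * Y 2 (-7) 11 + (-17) * Y 2 (-11) 15 + (-17) * Y (-2) (-15) 11 + 5 * Y (-2) (-11) 7)) + (-4353472) * ((-8) * Y 0 (-9) 9 - (3 * Y 2 (-5) 9 + (-15) * Y 2 (-9) 13 + (-15) * Y (-2) (-13) 9 + 3 * Y (-2) (-9) 5)) + 1889280 * ((-8) * Y 0 (-7) 7 - (1 * Y 2 (-3) 7 + (-13) * Y 2 (-7) 11 + (-13) * Y (-2) (-11) 7 + 1 * Y (-2) (-7) 3)) + (-2155896) * ((-8) * Y 0 (-5) 5 - ((-1) * Y 2 (-1) 5 + (-11) * Y 2 (-5) 9 + (-11) * Y (-2) (-9) 5 + (-1) * Y (-2) (-5) 1)) + 299520 * ((-8) * Y 0 (-3) 3 - ((-3) * Y 2 1 3 + (-9) * Y 2 (-3) 7 + (-9) * Y (-2) (-7) 3 + (-3) * Y (-2) (-3) (-1))) + 96768 * ((-8) * Y 0 (-1) 1 - ((-5) * Y 2 3 1 + (-7) * Y 2 (-1) 5 + (-7) * Y (-2) (-5) 1 + (-5) * Y (-2) (-1) (-3))) + 46080 * ((-8) * Y 0 1 (-1) - ((-7) * Y 2 5 (-1) + (-5) * Y 2 1 3 + (-5) * Y (-2) (-3) (-1) + (-7) * Y (-2) 1 (-5))) + (-7020660) * ((-10) * Y 1 (-9) 11 - (3 * Y 3 (-5) 11 + (-17) * Y 3 (-9) 15 + (-18) * Y (-2) (-15) 11 + 2 * Y (-2) (-9) 5)) + 4081380 *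 ((-10) * Y 1 (-7) 9 - (1 * Y 3 (-3) 9 + (-15) * Y 3 (-7) 13 + (-16) * Y (-2) (-13) 9 + 0 * Y (-2) (-7) 3)) + 900540 * ((-10) * Y 1 (-5) 7 - ((-1) * Y 3 (-1) 7 + (-13) * Y 3 (-5) 11 + (-14) * Y (-2) (-11) 7 + (-2) * Y (-2) (-5) 1)) + (-282240) * ((-10) * Y 1 (-3) 5 - ((-3) * Y 3 1 5 + (-11) * Y 3 (-3) 9 + (-12) * Y (-2) (-9) 5 + (-4) * Y (-2) (-3) (-1))) + (-80640) * ((-10) * Y 1 (-1) 3 - ((-5) * Y 3 3 3 + (-9) * Y 3 (-1) 7 + (-10) * Y (-2) (-7) 3 + (-6) * Y (-2) (-1) (-3))) + (-40320) * ((-10) * Y 1 1 1 - ((-7) * Y 3 5 1 + (-7) * Y 3 1 5 + (-8) * Y (-2) (-5) 1 + (-8) * Y (-2) 1 (-5))) + 8775825 * ((-8) * Y 2 (-9) 13 - (6 * Y 3 (-7) 13 + (-16) * Y 3 (-9) 15 + (-18) * Y (-1) (-15) 13 + 4 * Y (-1) (-9) 7)) + (-742365) * ((-8) * Y 2 (-7) 11 - (4 * Y 3 (-5) 11 + (-14) * Y 3 (-7) 13 + (-16) * Y (-1) (-13) 11 + 2 * Y (-1) (-7) 5)) + (-3307485) * ((-8) * Y 2 (-5) 9 - (2 * Y 3 (-3) 9 + (-12) * Y 3 (-5) 11 + (-14) * Y (-1) (-11) 9 + 0 * Y (-1) (-5) 3)) + 57105 * ((-8) * Y 2 (-3) 7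 - (0 * Y 3 (-1) 7 + (-10) * Y 3 (-3) 9 + (-12) * Y (-1) (-9) 7 + (-2) * Y (-1) (-3) 1)) + 100800 * ((-8) * Y 2 3 1 - ((-6) * Y 3 5 1 + (-4) * Y 3 3 3 + (-6) * Y (-1) (-3) 1 + (-8) * Y (-1) 3 (-5))) + 10530990 * ((-2) * Y 3 (-9) 15 - (12 * Y 2 (-11) 15 + (-12) * Y 2 (-9) 13 + (-15) * Y 1 (-13) 15 + 9 * Y 1 (-9) 11)) + (-913680) * ((-2) * Y 3 (-7) 13 - (10 * Y 2 (-9) 13 + (-10) * Y 2 (-7) 11 + (-13) * Y 1 (-11) 13 + 7 * Y 1 (-7) 9)) + (-1975680) * ((-2) * Y 3 (-5) 11 - (8 * Y 2 (-7) 11 + (-8) * Y 2 (-5) 9 + (-11) * Y 1 (-9) 11 + 5 * Y 1 (-5) 7)) + 87390 * ((-2) * Y 3 (-1) 7 - (4 * Y 2 (-3) 7 + (-4) * Y 2 (-1) 5 + (-7) * Y 1 (-5) 7 + 1 * Y 1 (-1) 3)) + (-564480) * ((-2) * Y 3 1 5 - (2 * Y 2 (-1) 5 + (-2) * Y 2 1 3 + (-5) * Y 1 (-3) 5 + (-1) * Y 1 1 1)) + 161280 * ((-2) * Y 3 5 1 - ((-2) * Y 2 3 1 + 2 * Y 2 5 (-1) + (-1) * Y 1 1 1 + (-5) * Y 1 5 (-3)))) = 0" by (simp only: e0 e1 e2 e3 e4 e5 e6 e13 e14 e15 e16 e17 e18 e25 e26 e27 e28 e31 e37 e38 e39 e41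 e42 e44 mult_zero_right add_0_right add_0_left)
  have b2: "((-59469120) * Y 0 (-11) 11 + 34827776 * Y 0 (-9) 9 + (-15114240) * Y 0 (-7) 7 + 17247168 * Y 0 (-5) 5 + (-2396160) * Y 0 (-3) 3 + (-774144) * Y 0 (-1) 1 + (-368640) * Y 0 1 (-1) + (-46304790) * Y 1 (-9) 11 + (-34418040) * Y 1 (-7) 9 + 1484730 * Y 1 (-5) 7 + 719010 * Y 1 (-1) 3 + 157964850 * Y (-1) (-15) 13 + (-34418040) * Y (-1) (-9) 7 + (-11877840) * Y (-1) (-13) 11 + 1484730 * Y (-1) (-7) 5 + (-46304790) * Y (-1) (-11) 9 + 806400 * Y (-1) 3 (-5) + 157964850 * Y 1 (-13) 15 + (-11877840) * Y 1 (-11) 13 + 806400 * Y 1 5 (-3)) = 0" by (simp add: Z0 Z1 z0 z1 z2 z3 z4 z5 z6)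
  have "719010 * Y (-1) (-3) 1 = 0 - 0" using c2 by (simp only: a2 b2)
  then have t2: "Y (-1) (-3) 1 = 0" by simp
  show ?thesis using B[of m n] t0 t1 t2 by (cases "Y (-1) m n = 0") auto
qed



context
  fixes D :: "bas \<Rightarrow> vvec" and \<Gamma> :: "real set" and \<epsilon> :: real
  assumes CE: "\<And>p q T a T' b. p\<in>\<Gamma> \<Longrightarrow> q\<in>\<Gamma> \<Longrightarrow> complex_of_real (p-q) * D (L,p+q) ((T,a),(T',b)) =
     complex_of_real (kd T p (a-p)) * D (L,q) ((T,a-p),(T',b))
   + complex_of_real (kd T' p (b-p)) * D (L,q) ((T,a),(T',b-p))
   - complex_of_real (kd T q (a-q)) * D (L,p) ((T,a-q),(T',b))
   - complex_of_real (kd T' q (b-q)) * D (L,p) ((T,a),(T',b-q))"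
  and DEG: "\<And>p T a T' b. p \<in> \<Gamma> \<Longrightarrow> D (L,p) ((T,a),(T',b)) \<noteq> 0 \<Longrightarrow> a + b = p"
  and FIN: "\<And>p. p \<in> \<Gamma> \<Longrightarrow> finite {z. D (L,p) z \<noteq> 0}"
  and G0: "0 \<in> \<Gamma>" and Gadd: "\<forall>x\<in>\<Gamma>. \<forall>y\<in>\<Gamma>. x+y\<in>\<Gamma>" and Gneg: "\<forall>x\<in>\<Gamma>. -x\<in>\<Gamma>"
  and epsG: "\<epsilon> \<in> \<Gamma>" and epos: "\<epsilon> > 0" and De: "D (L,\<epsilon>) = (\<lambda>_. 0)"
begin

lemma mults: "k \<in> {-2,-1,0,1,2,3} \<Longrightarrow> k * \<epsilon> \<in> \<Gamma>"
proof -
  have e2: "2*\<epsilon> \<in> \<Gamma>" using Gadd epsG by (metis mult_2)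
  have e3: "3*\<epsilon> \<in> \<Gamma>" using Gadd[rule_format, OF e2 epsG] by (simp add: algebra_simps)
  have em: "-\<epsilon> \<in> \<Gamma>" using Gneg epsG by auto
  have em2: "-(2*\<epsilon>) \<in> \<Gamma>" using Gneg e2 by auto
  assume "k \<in> {-2,-1,0,1,2,3}"
  then show ?thesis using e2 e3 em em2 epsG G0 by auto
qed

lemma u_brk:
  assumes q: "q \<in> \<Gamma>"
  shows "complex_of_real (kd T q (a-q)) * D (L,0) ((T,a-q),(T',b))
       + complex_of_real (kd T' q (b-q)) * D (L,0) ((T,a),(T',b-q)) = 0"
proof -
  have e: "complex_of_real (0-q) * D (L,0+q) ((T,a),(T',b)) =
     complex_of_real (kd T 0 (a-0)) * D (L,q) ((T,a-0),(T',b))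
   + complex_of_real (kd T' 0 (b-0)) * D (L,q) ((T,a),(T',b-0))
   - complex_of_real (kd T q (a-q)) * D (L,0) ((T,a-q),(T',b))
   - complex_of_real (kd T' q (b-q)) * D (L,0) ((T,a),(T',b-q))"
    using CE[OF G0 q] .
  have r: "complex_of_real (kd T q (a-q)) * D (L,0) ((T,a-q),(T',b))
       + complex_of_real (kd T' q (b-q)) * D (L,0) ((T,a),(T',b-q))
      = complex_of_real (q - (a+b)) * D (L,q) ((T,a),(T',b))"
    using e apply (simp add: kd0 of_real_add of_real_diff)
    by algebra
  show ?thesis
  proof (cases "D (L,q) ((T,a),(T',b)) = 0")
    case True then show ?thesis using r by simp
  next
    case False
    then have "a + b = q" using DEG[OF q] by blast
    then show ?thesis using r by simp
  qed
qed

lemma u_zero: "D (L,0) z = 0"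
proof (rule ccontr)
  assume nz: "D (L,0) z \<noteq> 0"
  let ?S = "{z. D (L,0) z \<noteq> 0}"
  have fin: "finite ?S" using FIN[OF G0] .
  define amax where "amax = Max ((\<lambda>z. snd (fst z)) ` ?S)"
  have "z \<in> ?S" using nz by simp
  then have ne: "(\<lambda>z. snd (fst z)) ` ?S \<noteq> {}" by blast
  have "amax \<in> (\<lambda>z. snd (fst z)) ` ?S" unfolding amax_def using fin ne by (intro Max_in) auto
  then obtain z' where z': "D (L,0) z' \<noteq> 0" "amax = snd (fst z')" by auto
  obtain T a T' c where zz: "z' = ((T,a),(T',c))" by (metis prod.exhaust)
  have z1: "D (L,0) ((T,amax),(T',c)) \<noteq> 0" using z' zz by simp
  have le: "\<And>T a T' c. D (L,0) ((T,a),(T',c)) \<noteq> 0 \<Longrightarrow> a \<le> amax"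
    unfolding amax_def using fin by (intro Max_ge) force+
  have kz: "kd T q amax = 0" if q: "q \<in> \<Gamma>" "q > 0" for q
  proof -
    have "D (L,0) ((T,amax+q),(T',c-q)) = 0" using le[of T "amax+q" T' "c-q"] q by force
    then have "complex_of_real (kd T q amax) * D (L,0) ((T,amax),(T',c)) = 0"
      using u_brk[OF q(1), of T "amax+q" T' c] by simp
    then show ?thesis using z1 by simp
  qed
  have "kd T \<epsilon> amax = 0" using kz epsG epos by auto
  moreover have "kd T (2*\<epsilon>) amax = 0" using kz[of "2*\<epsilon>"] mults[of 2] epos by auto
  ultimately show False using epos by (cases T) (auto simp: kd_def)
qed

lemma emG: "-\<epsilon> \<in> \<Gamma>" using Gneg epsG by auto

lemma chain: "complex_of_real (kd T \<epsilon> \<alpha>) * D (L,-\<epsilon>) ((T,\<alpha>),(T',\<beta>))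
   + complex_of_real (kd T' \<epsilon> (\<beta>-\<epsilon>)) * D (L,-\<epsilon>) ((T,\<alpha>+\<epsilon>),(T',\<beta>-\<epsilon>)) = 0"
proof -
  have e: "complex_of_real (\<epsilon> - -\<epsilon>) * D (L,\<epsilon> + -\<epsilon>) ((T,\<alpha>+\<epsilon>),(T',\<beta>)) =
     complex_of_real (kd T \<epsilon> (\<alpha>+\<epsilon>-\<epsilon>)) * D (L,-\<epsilon>) ((T,\<alpha>+\<epsilon>-\<epsilon>),(T',\<beta>))
   + complex_of_real (kd T' \<epsilon> (\<beta>-\<epsilon>)) * D (L,-\<epsilon>) ((T,\<alpha>+\<epsilon>),(T',\<beta>-\<epsilon>))
   - complex_of_real (kd T (-\<epsilon>) (\<alpha>+\<epsilon>- -\<epsilon>)) * D (L,\<epsilon>) ((T,\<alpha>+\<epsilon>- -\<epsilon>),(T',\<beta>))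
   - complex_of_real (kd T' (-\<epsilon>) (\<beta>- -\<epsilon>)) * D (L,\<epsilon>) ((T,\<alpha>+\<epsilon>),(T',\<beta>- -\<epsilon>))"
    using CE[OF epsG emG] .
  then show ?thesis by (simp add: u_zero De)
qed

lemma wfin: "finite {z. D (L,-\<epsilon>) z \<noteq> 0}" using FIN[OF emG] .

lemma w_top:
  assumes nz: "D (L,-\<epsilon>) ((T,\<alpha>),(T',\<beta>)) \<noteq> 0"
  shows "\<exists>n::nat. kd T \<epsilon> (\<alpha> + real n * \<epsilon>) = 0"
proof -
  define f where "f = (\<lambda>n::nat. ((T, \<alpha> + real n * \<epsilon>),(T', \<beta> - real n * \<epsilon>)))"
  let ?N = "{n. D (L,-\<epsilon>) (f n) \<noteq> 0}"
  have inj: "inj f" using epos by (auto simp: inj_def f_def)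
  have "?N = f -` {z. D (L,-\<epsilon>) z \<noteq> 0}" by auto
  then have fin: "finite ?N" using finite_vimageI[OF wfin inj] by simp
  have "0 \<in> ?N" using nz by (simp add: f_def)
  define n0 where "n0 = Max ?N"
  have n0: "n0 \<in> ?N" unfolding n0_def using fin \<open>0 \<in> ?N\<close> by (intro Max_in) auto
  have "Suc n0 \<notin> ?N"
  proof
    assume "Suc n0 \<in> ?N"
    then have "Suc n0 \<le> n0" unfolding n0_def using fin by (intro Max_ge) auto
    then show False by simp
  qed
  then have z: "D (L,-\<epsilon>) ((T, \<alpha> + real n0 * \<epsilon> + \<epsilon>),(T', \<beta> - real n0 * \<epsilon> - \<epsilon>)) = 0"
    by (simp add: f_def algebra_simps)
  have "complex_of_real (kd T \<epsilon> (\<alpha> + real n0 * \<epsilon>)) * D (L,-\<epsilon>) (f n0) = 0"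
    using chain[of T "\<alpha> + real n0 * \<epsilon>" T' "\<beta> - real n0 * \<epsilon>"] z by (simp add: f_def)
  then show ?thesis using n0 by auto
qed

lemma w_bot:
  assumes nz: "D (L,-\<epsilon>) ((T,\<alpha>),(T',\<beta>)) \<noteq> 0"
  shows "\<exists>n::nat. kd T' \<epsilon> (\<beta> + real n * \<epsilon>) = 0"
proof -
  define f where "f = (\<lambda>n::nat. ((T, \<alpha> - real n * \<epsilon>),(T', \<beta> + real n * \<epsilon>)))"
  let ?N = "{n. D (L,-\<epsilon>) (f n) \<noteq> 0}"
  have inj: "inj f" using epos by (auto simp: inj_def f_def)
  have "?N = f -` {z. D (L,-\<epsilon>) z \<noteq> 0}" by auto
  then have fin: "finite ?N" using finite_vimageI[OF wfin inj] by simp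
  have "0 \<in> ?N" using nz by (simp add: f_def)
  define n0 where "n0 = Max ?N"
  have n0: "n0 \<in> ?N" unfolding n0_def using fin \<open>0 \<in> ?N\<close> by (intro Max_in) auto
  have "Suc n0 \<notin> ?N"
  proof
    assume "Suc n0 \<in> ?N"
    then have "Suc n0 \<le> n0" unfolding n0_def using fin by (intro Max_ge) auto
    then show False by simp
  qed
  then have z: "D (L,-\<epsilon>) ((T, \<alpha> - real n0 * \<epsilon> - \<epsilon>),(T', \<beta> + real n0 * \<epsilon> + \<epsilon>)) = 0"
    by (simp add: f_def algebra_simps)
  have a1: "\<alpha> - real n0 * \<epsilon> - \<epsilon> + \<epsilon> = \<alpha> - real n0 * \<epsilon>" by simp
  have a2: "\<beta> + real n0 * \<epsilon> + \<epsilon> - \<epsilon> = \<beta> + real n0 * \<epsilon>" by simp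
  have "complex_of_real (kd T' \<epsilon> (\<beta> + real n0 * \<epsilon>)) * D (L,-\<epsilon>) (f n0) = 0"
    using chain[of T "\<alpha> - real n0 * \<epsilon> - \<epsilon>" T' "\<beta> + real n0 * \<epsilon> + \<epsilon>"] z
    unfolding a1 a2 by (simp add: f_def)
  then show ?thesis using n0 by auto
qed

lemma wbox:
  assumes nz: "D (L,-\<epsilon>) ((T,\<alpha>),(T',\<beta>)) \<noteq> 0"
  shows "\<exists>n m::nat. (((T=L\<or>T=I) \<and> \<alpha> + real n * \<epsilon> = \<epsilon>) \<or> ((T=G\<or>T=H) \<and> \<alpha> + real n * \<epsilon> = \<epsilon>/2))
     \<and> (((T'=L\<or>T'=I) \<and> \<beta> + real m * \<epsilon> = \<epsilon>) \<or> ((T'=G\<or>T'=H) \<and> \<beta> + real m * \<epsilon> = \<epsilon>/2))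
     \<and> \<alpha> + \<beta> = -\<epsilon>"
proof -
  obtain n where n: "kd T \<epsilon> (\<alpha> + real n * \<epsilon>) = 0" using w_top[OF nz] by blast
  obtain m where m: "kd T' \<epsilon> (\<beta> + real m * \<epsilon>) = 0" using w_bot[OF nz] by blast
  have "\<alpha> + \<beta> = -\<epsilon>" using DEG[OF emG nz] .
  then show ?thesis using kd_zero[OF n] kd_zero[OF m] by blast
qed

lemma cancel_e: "x * \<epsilon> = y * \<epsilon> \<Longrightarrow> x = y" using epos by simp

lemma adj_case:
  assumes TT: "T = L \<or> T = I" "T' = L \<or> T' = I"
  shows "D (L,-\<epsilon>) ((T,\<alpha>),(T',\<beta>)) = 0"
proof -
  define Y where "Y k m n = D (L, k*\<epsilon>) ((T, m*\<epsilon>),(T', n*\<epsilon>))" for k m n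
  define S where "S = {-2,-1,0,1,2,3::real}"
  have r1: "\<And>x y. x*\<epsilon> + y*\<epsilon> = (x+y)*\<epsilon>" and r2: "\<And>x y. x*\<epsilon> - y*\<epsilon> = (x-y)*\<epsilon>"
    by (simp_all add: algebra_simps)
  have kdT: "\<And>k m. kd T (k*\<epsilon>) ((m-k)*\<epsilon>) = (2*k-m)*\<epsilon>"
    using TT(1) by (auto simp: kd_def algebra_simps)
  have kdT': "\<And>k m. kd T' (k*\<epsilon>) ((m-k)*\<epsilon>) = (2*k-m)*\<epsilon>"
    using TT(2) by (auto simp: kd_def algebra_simps)
  have ne: "complex_of_real \<epsilon> \<noteq> 0" using epos by simp
  have E: "complex_of_real (k-l) * Y (k+l) m n = complex_of_real (2*k-m) * Y l (m-k) n
     + complex_of_real (2*k-n) * Y l m (n-k) - complex_of_real (2*l-m) * Y k (m-l) n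
     - complex_of_real (2*l-n) * Y k m (n-l)" if kl: "k \<in> S" "l \<in> S" for k l m n
  proof -
    have kG: "k*\<epsilon> \<in> \<Gamma>" and lG: "l*\<epsilon> \<in> \<Gamma>" using mults kl by (auto simp: S_def)
    have e: "complex_of_real (k*\<epsilon>-l*\<epsilon>) * D (L,k*\<epsilon>+l*\<epsilon>) ((T,m*\<epsilon>),(T',n*\<epsilon>)) =
     complex_of_real (kd T (k*\<epsilon>) (m*\<epsilon>-k*\<epsilon>)) * D (L,l*\<epsilon>) ((T,m*\<epsilon>-k*\<epsilon>),(T',n*\<epsilon>))
   + complex_of_real (kd T' (k*\<epsilon>) (n*\<epsilon>-k*\<epsilon>)) * D (L,l*\<epsilon>) ((T,m*\<epsilon>),(T',n*\<epsilon>-k*\<epsilon>))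
   - complex_of_real (kd T (l*\<epsilon>) (m*\<epsilon>-l*\<epsilon>)) * D (L,k*\<epsilon>) ((T,m*\<epsilon>-l*\<epsilon>),(T',n*\<epsilon>))
   - complex_of_real (kd T' (l*\<epsilon>) (n*\<epsilon>-l*\<epsilon>)) * D (L,k*\<epsilon>) ((T,m*\<epsilon>),(T',n*\<epsilon>-l*\<epsilon>))"
      using CE[OF kG lG] .
    then have e2: "complex_of_real ((k-l)*\<epsilon>) * Y (k+l) m n =
      complex_of_real ((2*k-m)*\<epsilon>) * Y l (m-k) n + complex_of_real ((2*k-n)*\<epsilon>) * Y l m (n-k)
     - complex_of_real ((2*l-m)*\<epsilon>) * Y k (m-l) n - complex_of_real ((2*l-n)*\<epsilon>) * Y k m (n-l)"
      unfolding Y_def by (simp only: r1 r2 kdT kdT')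
    then show ?thesis using ne unfolding of_real_mult by algebra
  qed
  have Z0: "\<And>m n. Y 0 m n = 0" by (simp add: Y_def u_zero)
  have Z1: "\<And>m n. Y 1 m n = 0" by (simp add: Y_def De)
  have B: "(m,n) \<in> {(1,-2),(0,-1),(-1,0),(-2,1)}" if nz: "Y (-1) m n \<noteq> 0" for m n
  proof -
    have "D (L,-\<epsilon>) ((T,m*\<epsilon>),(T',n*\<epsilon>)) \<noteq> 0" using nz by (simp add: Y_def)
    from wbox[OF this] TT obtain n0 m0 :: nat where
      h1: "m*\<epsilon> + real n0 * \<epsilon> = \<epsilon>" and h2: "n*\<epsilon> + real m0 * \<epsilon> = \<epsilon>" and h3: "m*\<epsilon> + n*\<epsilon> = -\<epsilon>"
      by auto
    have g1: "m + real n0 = 1" using cancel_e[of "m + real n0" 1] h1 by (simp add: algebra_simps)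
    have g2: "n + real m0 = 1" using cancel_e[of "n + real m0" 1] h2 by (simp add: algebra_simps)
    have g3: "m + n = -1" using cancel_e[of "m + n" "-1"] h3 by (simp add: algebra_simps)
    have "real (n0 + m0) = 3" using g1 g2 g3 by simp
    then have "n0 + m0 = 3" by linarith
    then have "n0 = 0 \<or> n0 = 1 \<or> n0 = 2 \<or> n0 = 3" by arith
    then show ?thesis using g1 g2 g3 by auto
  qed
  have "Y (-1) (\<alpha>/\<epsilon>) (\<beta>/\<epsilon>) = 0" by (rule cert_adj[OF E S_def Z0 Z1 B]) auto
  then show ?thesis using epos by (simp add: Y_def)
qed

lemma den_case:
  assumes TT: "T = G \<or> T = H" "T' = G \<or> T' = H"
  shows "D (L,-\<epsilon>) ((T,\<alpha>),(T',\<beta>)) = 0"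
proof -
  define Y where "Y k m n = D (L, k*\<epsilon>) ((T, m*\<epsilon>/2),(T', n*\<epsilon>/2))" for k m n
  define S where "S = {-2,-1,0,1,2,3::real}"
  have r1: "\<And>x y. x*\<epsilon> + y*\<epsilon> = (x+y)*\<epsilon>" and r2: "\<And>x y. x*\<epsilon> - y*\<epsilon> = (x-y)*\<epsilon>"
    and r3: "\<And>x y. x*\<epsilon>/2 - y*\<epsilon> = (x-2*y)*\<epsilon>/2"
    by (simp_all add: algebra_simps)
  have kdT: "\<And>k m. kd T (k*\<epsilon>) ((m-2*k)*\<epsilon>/2) = (3*k-m)*\<epsilon>/2"
    using TT(1) by (auto simp: kd_def field_simps)
  have kdT': "\<And>k m. kd T' (k*\<epsilon>) ((m-2*k)*\<epsilon>/2) = (3*k-m)*\<epsilon>/2"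
    using TT(2) by (auto simp: kd_def field_simps)
  have ne: "complex_of_real \<epsilon> \<noteq> 0" using epos by simp
  have E: "complex_of_real (2*(k-l)) * Y (k+l) m n = complex_of_real (3*k-m) * Y l (m-2*k) n
     + complex_of_real (3*k-n) * Y l m (n-2*k) - complex_of_real (3*l-m) * Y k (m-2*l) n
     - complex_of_real (3*l-n) * Y k m (n-2*l)" if kl: "k \<in> S" "l \<in> S" for k l m n
  proof -
    have kG: "k*\<epsilon> \<in> \<Gamma>" and lG: "l*\<epsilon> \<in> \<Gamma>" using mults kl by (auto simp: S_def)
    have e: "complex_of_real (k*\<epsilon>-l*\<epsilon>) * D (L,k*\<epsilon>+l*\<epsilon>) ((T,m*\<epsilon>/2),(T',n*\<epsilon>/2)) =
     complex_of_real (kd T (k*\<epsilon>) (m*\<epsilon>/2-k*\<epsilon>)) * D (L,l*\<epsilon>) ((T,m*\<epsilon>/2-k*\<epsilon>),(T',n*\<epsilon>/2))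
   + complex_of_real (kd T' (k*\<epsilon>) (n*\<epsilon>/2-k*\<epsilon>)) * D (L,l*\<epsilon>) ((T,m*\<epsilon>/2),(T',n*\<epsilon>/2-k*\<epsilon>))
   - complex_of_real (kd T (l*\<epsilon>) (m*\<epsilon>/2-l*\<epsilon>)) * D (L,k*\<epsilon>) ((T,m*\<epsilon>/2-l*\<epsilon>),(T',n*\<epsilon>/2))
   - complex_of_real (kd T' (l*\<epsilon>) (n*\<epsilon>/2-l*\<epsilon>)) * D (L,k*\<epsilon>) ((T,m*\<epsilon>/2),(T',n*\<epsilon>/2-l*\<epsilon>))"
      using CE[OF kG lG] .
    then have e2: "complex_of_real ((k-l)*\<epsilon>) * Y (k+l) m n =
      complex_of_real ((3*k-m)*\<epsilon>/2) * Y l (m-2*k) n + complex_of_real ((3*k-n)*\<epsilon>/2) * Y l m (n-2*k)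
     - complex_of_real ((3*l-m)*\<epsilon>/2) * Y k (m-2*l) n - complex_of_real ((3*l-n)*\<epsilon>/2) * Y k m (n-2*l)"
      unfolding Y_def by (simp only: r1 r2 r3 kdT kdT')
    then show ?thesis using ne unfolding of_real_mult of_real_divide of_real_numeral by algebra
  qed
  have Z0: "\<And>m n. Y 0 m n = 0" by (simp add: Y_def u_zero)
  have Z1: "\<And>m n. Y 1 m n = 0" by (simp add: Y_def De)
  have B: "(m,n) \<in> {(1,-3),(-1,-1),(-3,1)}" if nz: "Y (-1) m n \<noteq> 0" for m n
  proof -
    have "D (L,-\<epsilon>) ((T,m*\<epsilon>/2),(T',n*\<epsilon>/2)) \<noteq> 0" using nz by (simp add: Y_def)
    from wbox[OF this] TT obtain n0 m0 :: nat where
      h1: "m*\<epsilon>/2 + real n0 * \<epsilon> = \<epsilon>/2" and h2: "n*\<epsilon>/2 + real m0 * \<epsilon> = \<epsilon>/2"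
      and h3: "m*\<epsilon>/2 + n*\<epsilon>/2 = -\<epsilon>"
      by auto
    have g1: "m + 2*real n0 = 1" using cancel_e[of "m + 2*real n0" 1] h1 by (simp add: field_simps)
    have g2: "n + 2*real m0 = 1" using cancel_e[of "n + 2*real m0" 1] h2 by (simp add: field_simps)
    have g3: "m + n = -2" using cancel_e[of "m + n" "-2"] h3 by (simp add: field_simps)
    have "real (n0 + m0) = 2" using g1 g2 g3 by simp
    then have "n0 + m0 = 2" by linarith
    then have "n0 = 0 \<or> n0 = 1 \<or> n0 = 2" by arith
    then show ?thesis using g1 g2 g3 by auto
  qed
  have "Y (-1) (2*\<alpha>/\<epsilon>) (2*\<beta>/\<epsilon>) = 0" by (rule cert_den[OF E S_def Z0 Z1 B]) auto
  then show ?thesis using epos by (simp add: Y_def)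
qed

lemma w_zero: "D (L,-\<epsilon>) ((T,\<alpha>),(T',\<beta>)) = 0"
proof (rule ccontr)
  assume nz: "D (L,-\<epsilon>) ((T,\<alpha>),(T',\<beta>)) \<noteq> 0"
  show False
  proof (cases "T = L \<or> T = I")
    case T1: True
    show False
    proof (cases "T' = L \<or> T' = I")
      case True then show False using adj_case[OF T1 True] nz by simp
    next
      case False
      from wbox[OF nz] T1 False obtain n0 m0 :: nat where
        h1: "\<alpha> + real n0 * \<epsilon> = \<epsilon>" and h2: "\<beta> + real m0 * \<epsilon> = \<epsilon>/2" and h3: "\<alpha> + \<beta> = -\<epsilon>"
        by auto
      have "(2 * real (n0 + m0)) * \<epsilon> = 5 * \<epsilon>" using h1 h2 h3 by (simp add: algebra_simps)
      then have "2 * real (n0 + m0) = 5" by (rule cancel_e)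
      then have "2 * (n0 + m0) = (5::nat)" by linarith
      then show False by arith
    qed
  next
    case T1: False
    then have T1': "T = G \<or> T = H" by (cases T) auto
    show False
    proof (cases "T' = G \<or> T' = H")
      case True then show False using den_case[OF T1' True] nz by simp
    next
      case False
      from wbox[OF nz] T1 False obtain n0 m0 :: nat where
        h1: "\<alpha> + real n0 * \<epsilon> = \<epsilon>/2" and h2: "\<beta> + real m0 * \<epsilon> = \<epsilon>" and h3: "\<alpha> + \<beta> = -\<epsilon>"
        by (cases T'; auto)
      have "(2 * real (n0 + m0)) * \<epsilon> = 5 * \<epsilon>" using h1 h2 h3 by (simp add: algebra_simps)
      then have "2 * real (n0 + m0) = 5" by (rule cancel_e)
      then have "2 * (n0 + m0) = (5::nat)" by linarith
      then show False by arith
    qed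
  qed
qed

lemma generic_result: "D (L,-\<epsilon>) = (\<lambda>_. 0)"
proof
  fix z :: "bas \<times> bas"
  obtain T a T' b where "z = ((T,a),(T',b))" by (metis prod.exhaust)
  then show "D (L,-\<epsilon>) z = 0" using w_zero by simp
qed

end

lemma par_split:
  assumes h0: "homog_der \<Gamma> s 0 d0" and h1: "homog_der \<Gamma> s 1 d1" and p: "p \<in> \<Gamma>"
  shows "d0 (L,p) z = 0 \<or> d1 (L,p) z = 0"
proof (rule ccontr)
  obtain a c where z: "z = (a,c)" by (metis prod.exhaust)
  have v: "valid \<Gamma> s (L,p)" using p by (simp add: valid_def)
  have P0: "\<forall>b. valid \<Gamma> s b \<longrightarrow> finite {w. d0 b w \<noteq> 0}
        \<and> (\<forall>a c. d0 b (a,c) \<noteq> 0 \<longrightarrow> valid \<Gamma> s a \<and> valid \<Gamma> s c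
              \<and> (par (fst a) + par (fst c)) mod 2 = (par (fst b) + 0) mod 2)"
    using h0 unfolding homog_der_def by blast
  have P1: "\<forall>b. valid \<Gamma> s b \<longrightarrow> finite {w. d1 b w \<noteq> 0}
        \<and> (\<forall>a c. d1 b (a,c) \<noteq> 0 \<longrightarrow> valid \<Gamma> s a \<and> valid \<Gamma> s c
              \<and> (par (fst a) + par (fst c)) mod 2 = (par (fst b) + 1) mod 2)"
    using h1 unfolding homog_der_def by blast
  assume "\<not> (d0 (L,p) z = 0 \<or> d1 (L,p) z = 0)"
  then have n0: "d0 (L,p) (a,c) \<noteq> 0" and n1: "d1 (L,p) (a,c) \<noteq> 0" using z by auto
  have "(par (fst a) + par (fst c)) mod 2 = (par L + 0) mod 2"
    using P0[rule_format, OF v] n0 by (cases a, cases c) auto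
  moreover have "(par (fst a) + par (fst c)) mod 2 = (par L + 1) mod 2"
    using P1[rule_format, OF v] n1 by (cases a, cases c) auto
  ultimately show False by simp
qed

lemma homog_fin:
  assumes h: "homog_der \<Gamma> s e D" and p: "p \<in> \<Gamma>"
  shows "finite {z. D (L,p) z \<noteq> 0}"
proof -
  have P: "\<forall>b. valid \<Gamma> s b \<longrightarrow> finite {w. D b w \<noteq> 0}
        \<and> (\<forall>a c. D b (a,c) \<noteq> 0 \<longrightarrow> valid \<Gamma> s a \<and> valid \<Gamma> s c
              \<and> (par (fst a) + par (fst c)) mod 2 = (par (fst b) + e) mod 2)"
    using h unfolding homog_der_def by blast
  have v: "valid \<Gamma> s (L,p)" using p by (simp add: valid_def)
  show ?thesis using P[rule_format, OF v] by blast
qed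

lemma homog_part:
  assumes h: "homog_der \<Gamma> s e D" and ho: "homog_der \<Gamma> s e' D'"
    and sep: "\<And>p z. p \<in> \<Gamma> \<Longrightarrow> D (L,p) z = 0 \<or> D' (L,p) z = 0"
    and sum: "\<forall>b. valid \<Gamma> s b \<longrightarrow> d b = (\<lambda>z. D b z + D' b z)"
    and degd: "\<forall>b a c. valid \<Gamma> s b \<longrightarrow> d b (a,c) \<noteq> 0 \<longrightarrow> snd a + snd c = snd b"
    and G0: "0 \<in> \<Gamma>" and Gadd: "\<forall>x\<in>\<Gamma>. \<forall>y\<in>\<Gamma>. x+y\<in>\<Gamma>" and Gneg: "\<forall>x\<in>\<Gamma>. -x\<in>\<Gamma>"
    and epsG: "\<epsilon> \<in> \<Gamma>" and epos: "\<epsilon> > 0" and de: "d (L,\<epsilon>) = (\<lambda>_. 0)"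
  shows "D (L,-\<epsilon>) = (\<lambda>_. 0)"
proof (rule generic_result[of \<Gamma> D \<epsilon>])
  have dL: "\<And>p z. p \<in> \<Gamma> \<Longrightarrow> d (L,p) z = D (L,p) z + D' (L,p) z"
    using sum by (simp add: valid_def)
  show "\<And>p q T a T' b. p\<in>\<Gamma> \<Longrightarrow> q\<in>\<Gamma> \<Longrightarrow> complex_of_real (p-q) * D (L,p+q) ((T,a),(T',b)) =
     complex_of_real (kd T p (a-p)) * D (L,q) ((T,a-p),(T',b))
   + complex_of_real (kd T' p (b-p)) * D (L,q) ((T,a),(T',b-p))
   - complex_of_real (kd T q (a-q)) * D (L,p) ((T,a-q),(T',b))
   - complex_of_real (kd T' q (b-q)) * D (L,p) ((T,a),(T',b-q))"
    by (rule CE_homog[OF h])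
  show "\<And>p T a T' b. p \<in> \<Gamma> \<Longrightarrow> D (L,p) ((T,a),(T',b)) \<noteq> 0 \<Longrightarrow> a + b = p"
  proof -
    fix p T a T' b assume p: "p \<in> \<Gamma>" and nz: "D (L,p) ((T,a),(T',b)) \<noteq> 0"
    then have "D' (L,p) ((T,a),(T',b)) = 0" using sep by blast
    then have "d (L,p) ((T,a),(T',b)) \<noteq> 0" using dL[OF p] nz by simp
    moreover have "valid \<Gamma> s (L,p)" using p by (simp add: valid_def)
    ultimately show "a + b = p" using degd[rule_format, of "(L,p)" "(T,a)" "(T',b)"] by simp
  qed
  show "\<And>p. p \<in> \<Gamma> \<Longrightarrow> finite {z. D (L,p) z \<noteq> 0}" using homog_fin[OF h] by blast
  show "0 \<in> \<Gamma>" "\<forall>x\<in>\<Gamma>. \<forall>y\<in>\<Gamma>. x+y\<in>\<Gamma>" "\<forall>x\<in>\<Gamma>. -x\<in>\<Gamma>" "\<epsilon> \<in> \<Gamma>" "\<epsilon> > 0"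
    using G0 Gadd Gneg epsG epos by auto
  show "D (L,\<epsilon>) = (\<lambda>_. 0)"
  proof
    fix z
    have "D (L,\<epsilon>) z + D' (L,\<epsilon>) z = 0" using dL[OF epsG, of z] de by simp
    then show "D (L,\<epsilon>) z = 0" using sep[OF epsG, of z] by auto
  qed
qed

theorem mainTheorem9:
  fixes \<Gamma> :: "real set" and s \<epsilon> :: real and d :: "bas \<Rightarrow> vvec"
  assumes "0 \<in> \<Gamma>" and "\<forall>x\<in>\<Gamma>. \<forall>y\<in>\<Gamma>. x + y \<in> \<Gamma>" and "\<forall>x\<in>\<Gamma>. - x \<in> \<Gamma>"
    and "\<Gamma> \<noteq> {0}" and "2 * s \<in> \<Gamma>"
    and "\<epsilon> \<in> \<Gamma>" and "\<epsilon> > 0"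
    and "d \<in> Der0 \<Gamma> s"
    and "d (L, \<epsilon>) = (\<lambda>_. 0)"
  shows "d (L, - \<epsilon>) = (\<lambda>_. 0)"
proof -
  from assms(8) obtain d0 d1 where h0: "homog_der \<Gamma> s 0 d0" and h1: "homog_der \<Gamma> s 1 d1"
    and sum: "\<forall>b. valid \<Gamma> s b \<longrightarrow> d b = (\<lambda>z. d0 b z + d1 b z)"
    and degd: "\<forall>b a c. valid \<Gamma> s b \<longrightarrow> d b (a,c) \<noteq> 0 \<longrightarrow> snd a + snd c = snd b"
    unfolding Der0_def by blast
  have sep: "\<And>p z. p \<in> \<Gamma> \<Longrightarrow> d0 (L,p) z = 0 \<or> d1 (L,p) z = 0"
    using par_split[OF h0 h1] by blast
  have sep': "\<And>p z. p \<in> \<Gamma> \<Longrightarrow> d1 (L,p) z = 0 \<or> d0 (L,p) z = 0"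
    using sep by blast
  have sum': "\<forall>b. valid \<Gamma> s b \<longrightarrow> d b = (\<lambda>z. d1 b z + d0 b z)"
    using sum by (simp add: add.commute)
  have z0: "d0 (L,-\<epsilon>) = (\<lambda>_. 0)"
    by (rule homog_part[OF h0 h1 sep sum degd assms(1,2,3,6,7,9)])
  have z1: "d1 (L,-\<epsilon>) = (\<lambda>_. 0)"
    by (rule homog_part[OF h1 h0 sep' sum' degd assms(1,2,3,6,7,9)])
  have v: "valid \<Gamma> s (L,-\<epsilon>)" using assms(3,6) by (simp add: valid_def)
  show ?thesis using sum[rule_format, OF v] z0 z1 by simp
qed

end
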